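(* Let $a\in(0,1)$ and $F\in\Gamma_0^s(\mathbb{R}_+)$, and suppose $\hat F^a$ is a metric on $[0,+\infty)$. Then the sequence $\{T_a^{(n)}(F)\}_n$ is pointwise increasing and converges pointwise to a function $F^\infty$ which is a fixed point of $T_a$. Moreover, if $(\widehat{F^\infty})^a$ is a metric on $[0,+\infty)$, then $F^\infty(s)=c|s^a-1|^{1/a}$ for some $c\in(0,+\infty)$.
   Context: $\Gamma_0(\mathbb{R}_+)$ is the set of functions $F:[0,\infty)\to[0,\infty]$ that are convex, lower semicontinuous, with $F(1)=0$. For $F\in\Gamma_0(\mathbb{R}_+)$: $\mathrm{rec}(F)(r)=\lim_{\alpha\to\infty}F(1+\alpha r)/\alpha$, $F'_\infty:=\mathrm{rec}(F)(1)$; the perspective function is $\hat F(r,t)=tF(r/t)$ for $t>0$, $\hat F(r,0)=\mathrm{rec}(F)(r)$; the reverse entropy is $R(s)=sF(1/s)$ for $s>0$, $R(0)=F'_\infty$. $\Gamma_0^s(\mathbb{R}_+)$ is the set of $F\in\Gamma_0(\mathbb{R}_+)$ with $F=R$; for such $F$, $\hat F$ is symmetric and $\hat F(1,t)=F(t)$. The marginal perspective function $H_F$ is the lower semicontinuous envelope of $\tilde H_F(r_1,r_2)=\inf_{\theta>0}[\hat F(\theta,r_1)+\hat F(\theta,r_2)]$. For $a\in(0,1]$, $T_a:\Gamma_0(\mathbb{R}_+)\to\Gamma_0^s(\mathbb{R}_+)$ is $T_a(F)(s)=2^{1/a-1}H_F(1,s)$, and $T_a^{(n)}$ is its $n$-th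 iterate. A metric on $[0,\infty)$ is a finite-valued function $D:[0,\infty)^2\to[0,\infty)$ with $D(x,y)=0\iff x=y$, symmetric, satisfying the triangle inequality. *)

theory Defs
  imports "HOL-Analysis.Analysis"
begin

text \<open>Functions F : [0,\<infinity>) \<rightarrow> [0,\<infinity>] are modelled as real \<Rightarrow> ereal;
  only their values on [0,\<infinity>) matter.\<close>

definition convex_nn :: "(real \<Rightarrow> ereal) \<Rightarrow> bool" where
  "convex_nn F \<longleftrightarrow> (\<forall>x\<ge>0. \<forall>y\<ge>0. \<forall>t::real. 0 \<le> t \<and> t \<le> 1 \<longrightarrow>
      F (t * x + (1 - t) * y) \<le> ereal t * F x + ereal (1 - t) * F y)"

definition lsc_within :: "'a::topological_space set \<Rightarrow> ('a \<Rightarrow> ereal) \<Rightarrow> bool" where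
  "lsc_within D f \<longleftrightarrow> (\<forall>x\<in>D. f x \<le> Liminf (at x within D) f)"

definition Gamma0 :: "(real \<Rightarrow> ereal) \<Rightarrow> bool" where
  "Gamma0 F \<longleftrightarrow> (\<forall>x\<ge>0. 0 \<le> F x) \<and> convex_nn F \<and> lsc_within {0..} F \<and> F 1 = 0"

definition recF :: "(real \<Rightarrow> ereal) \<Rightarrow> real \<Rightarrow> ereal" where
  "recF F r = Lim at_top (\<lambda>\<alpha>::real. F (1 + \<alpha> * r) / ereal \<alpha>)"

definition Finf_slope :: "(real \<Rightarrow> ereal) \<Rightarrow> ereal" where
  "Finf_slope F = recF F 1"

definition persp :: "(real \<Rightarrow> ereal) \<Rightarrow> real \<Rightarrow> real \<Rightarrow> ereal" where
  "persp F r t = (if t > 0 then ereal t * F (r / t) else recF F r)"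

definition reverse_entropy :: "(real \<Rightarrow> ereal) \<Rightarrow> real \<Rightarrow> ereal" where
  "reverse_entropy F s = (if s > 0 then ereal s * F (1 / s) else Finf_slope F)"

definition Gamma0s :: "(real \<Rightarrow> ereal) \<Rightarrow> bool" where
  "Gamma0s F \<longleftrightarrow> Gamma0 F \<and> (\<forall>s\<ge>0. F s = reverse_entropy F s)"

definition Htilde :: "(real \<Rightarrow> ereal) \<Rightarrow> real \<times> real \<Rightarrow> ereal" where
  "Htilde F p = (INF \<theta>\<in>{0<..}. persp F \<theta> (fst p) + persp F \<theta> (snd p))"

definition lsc_envelope :: "'a::topological_space set \<Rightarrow> ('a \<Rightarrow> ereal) \<Rightarrow> 'a \<Rightarrow> ereal" where
  "lsc_envelope D g p = (SUP h\<in>{h. lsc_within D h \<and> (\<forall>q\<in>D. h q \<le> g q)}. h p)"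

definition HF :: "(real \<Rightarrow> ereal) \<Rightarrow> real \<Rightarrow> real \<Rightarrow> ereal" where
  "HF F r1 r2 = lsc_envelope ({0..} \<times> {0..}) (Htilde F) (r1, r2)"

definition Ta :: "real \<Rightarrow> (real \<Rightarrow> ereal) \<Rightarrow> real \<Rightarrow> ereal" where
  "Ta a F s = ereal (2 powr (1 / a - 1)) * HF F 1 s"

definition metric_nn :: "(real \<Rightarrow> real \<Rightarrow> real) \<Rightarrow> bool" where
  "metric_nn D \<longleftrightarrow> (\<forall>x\<ge>0. \<forall>y\<ge>0. \<forall>z\<ge>0.
      0 \<le> D x y \<and> (D x y = 0 \<longleftrightarrow> x = y) \<and> D x y = D y x \<and> D x z \<le> D x y + D y z)"

definition persp_pow_metric :: "real \<Rightarrow> (real \<Rightarrow> ereal) \<Rightarrow> bool" where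
  "persp_pow_metric a F \<longleftrightarrow> (\<forall>x\<ge>0. \<forall>y\<ge>0. persp F x y \<noteq> \<infinity>) \<and>
      metric_nn (\<lambda>x y. real_of_ereal (persp F x y) powr a)"

end

theory Submission
  imports Defs
begin


definition cvx :: "(real \<Rightarrow> real) \<Rightarrow> bool" where
  "cvx g \<longleftrightarrow> (\<forall>x\<ge>0. \<forall>y\<ge>0. \<forall>t. 0 \<le> t \<and> t \<le> 1 \<longrightarrow> g (t*x + (1-t)*y) \<le> t * g x + (1-t) * g y)"

definition CC :: "(real \<Rightarrow> real) \<Rightarrow> bool" where
  "CC g \<longleftrightarrow> (\<forall>x\<ge>0. 0 \<le> g x) \<and> g 1 = 0 \<and> cvx g \<and> continuous_on {0..} g \<and> (\<forall>s>0. g s = s * g (1/s))"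

lemma CC_nonneg: "CC g \<Longrightarrow> 0 \<le> x \<Longrightarrow> 0 \<le> g x" unfolding CC_def by blast
lemma CC_1: "CC g \<Longrightarrow> g 1 = 0" unfolding CC_def by blast
lemma CC_cvx: "CC g \<Longrightarrow> cvx g" unfolding CC_def by blast
lemma CC_cont: "CC g \<Longrightarrow> continuous_on {0..} g" unfolding CC_def by blast
lemma CC_sym: "CC g \<Longrightarrow> 0 < s \<Longrightarrow> g s = s * g (1/s)" unfolding CC_def by blast

definition P :: "(real \<Rightarrow> real) \<Rightarrow> real \<Rightarrow> real \<Rightarrow> real" where
  "P g x y = (if y > 0 then y * g (x/y) else x * g 0)"

lemma cvxD: "cvx g \<Longrightarrow> 0 \<le> x \<Longrightarrow> 0 \<le> y \<Longrightarrow> 0 \<le> t \<Longrightarrow> t \<le> 1 \<Longrightarrow> g (t*x + (1-t)*y) \<le> t * g x + (1-t) * g y"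
  unfolding cvx_def by blast

lemma CC_le0: assumes "CC g" "0 \<le> u" "u \<le> 1" shows "g u \<le> (1-u) * g 0"
proof -
  have "g ((1-u)*0 + (1-(1-u))*1) \<le> (1-u) * g 0 + (1-(1-u)) * g 1"
    using assms by (intro cvxD CC_cvx) auto
  thus ?thesis using CC_1[OF assms(1)] by simp
qed

lemma CC_dec: assumes "CC g" "0 \<le> u" "u \<le> v" "v \<le> 1" shows "g v \<le> g u"
proof (cases "u = 1")
  case True thus ?thesis using assms by auto
next
  case False
  define t where "t = (1 - v)/(1 - u)"
  have u1: "1 - u > 0" using assms False by simp
  have t: "0 \<le> t" "t \<le> 1" using assms u1 by (auto simp: t_def divide_le_eq_1)
  have h: "t * (1 - u) = 1 - v" using u1 unfolding t_def by simp
  have veq: "v = t*u + (1-t)*1" using h by (simp add: algebra_simps)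
  have "g (t*u + (1-t)*1) \<le> t * g u + (1-t) * g 1"
    using assms t by (intro cvxD CC_cvx) auto
  hence "g v \<le> t * g u" using veq CC_1[OF assms(1)] by simp
  also have "\<dots> \<le> g u" using t mult_left_le_one_le[of "g u" t] CC_nonneg[OF assms(1,2)] by simp
  finally show ?thesis .
qed

lemma CC_inc: assumes "CC g" "1 \<le> u" "u \<le> v" shows "g u \<le> g v"
proof (cases "u = v")
  case True thus ?thesis by simp
next
  case False
  define t where "t = (v - u)/(v - 1)"
  have v1: "v - 1 > 0" using assms False by simp
  have t: "0 \<le> t" "t \<le> 1" using assms v1 by (auto simp: t_def divide_le_eq_1)
  have h: "t * (v - 1) = v - u" using v1 unfolding t_def by simp
  have ueq: "u = t * 1 + (1 - t) * v" using h by (simp add: algebra_simps)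
  have "g (t * 1 + (1 - t) * v) \<le> t * g 1 + (1-t) * g v"
    using assms t by (intro cvxD CC_cvx) auto
  hence "g u \<le> (1-t) * g v" using ueq CC_1[OF assms(1)] by simp
  also have "\<dots> \<le> g v" using t mult_left_le_one_le[of "g v" "1-t"] CC_nonneg[OF assms(1), of v] assms by simp
  finally show ?thesis .
qed

lemma CC_grow: assumes "CC g" "2 \<le> x" shows "(x - 1) * g 2 \<le> g x"
proof -
  define t where "t = 1/(x-1)"
  have x1: "x - 1 > 0" using assms by simp
  have t: "0 \<le> t" "t \<le> 1" using assms x1 by (auto simp: t_def)
  have h: "t * (x - 1) = 1" using x1 unfolding t_def by simp
  have eq2: "t*x + (1-t)*1 = 2" using h by (simp add: algebra_simps)
  have "g (t*x + (1-t)*1) \<le> t * g x + (1-t) * g 1"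
    using assms t by (intro cvxD CC_cvx) auto
  hence "g 2 \<le> t * g x + (1-t) * g 1" unfolding eq2 .
  hence "g 2 \<le> t * g x" using CC_1[OF assms(1)] by simp
  hence "(x - 1) * g 2 \<le> (x - 1) * (t * g x)" using x1 by simp
  also have "\<dots> = (t * (x - 1)) * g x" by (simp add: algebra_simps)
  also have "\<dots> = g x" using h by simp
  finally show ?thesis .
qed

lemma P_nonneg: assumes "CC g" "0 \<le> x" "0 \<le> y" shows "0 \<le> P g x y"
proof (cases "y > 0")
  case True
  have "0 \<le> g (x/y)" using CC_nonneg[OF assms(1)] assms True by simp
  thus ?thesis using True by (simp add: P_def)
next
  case False
  have "0 \<le> g 0" using CC_nonneg[OF assms(1)] by simp
  thus ?thesis using False assms by (simp add: P_def)
qed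

lemma P_1: "P g x 1 = g x" by (simp add: P_def)

lemma P_hom: assumes "0 < l" shows "P g (l*x) (l*y) = l * P g x y"
  using assms by (auto simp: P_def zero_less_mult_iff)

lemma P_sym: assumes "CC g" "0 \<le> x" "0 \<le> y" shows "P g x y = P g y x"
proof (cases "x > 0 \<and> y > 0")
  case True
  have "g (x/y) = (x/y) * g (1/(x/y))" using CC_sym[OF assms(1), of "x/y"] True by simp
  thus ?thesis using True by (simp add: P_def)
qed (use assms in \<open>auto simp: P_def\<close>)

lemma P_1s: "CC g \<Longrightarrow> 0 \<le> s \<Longrightarrow> P g 1 s = g s"
  using P_sym[of g 1 s] by (simp add: P_1)

lemma P_diag: "CC g \<Longrightarrow> 0 \<le> x \<Longrightarrow> P g x x = 0"
  by (auto simp: P_def CC_1)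

lemma P_maxmin: assumes "CC g" "0 \<le> x" "0 \<le> y"
  shows "P g x y = max x y * g (min x y / max x y)"
proof (cases "x \<le> y")
  case True
  show ?thesis
  proof (cases "y = 0")
    case True thus ?thesis using assms \<open>x \<le> y\<close> by (simp add: P_def)
  next
    case False thus ?thesis using assms \<open>x \<le> y\<close> by (simp add: P_def max_def min_def)
  qed
next
  case False
  hence "P g x y = P g y x" using P_sym assms by auto
  thus ?thesis using False assms by (auto simp: P_def max_def min_def)
qed



lemma ev_within: "(\<And>y. y \<in> S \<Longrightarrow> Q y) \<Longrightarrow> eventually Q (at x within S)"
  by (auto simp: eventually_at_filter)

lemma Pm_le: assumes "CC g" "0 \<le> x" "0 \<le> y"
  shows "0 \<le> max x y * g (min x y / max x y)" "max x y * g (min x y / max x y) \<le> max x y * g 0"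
proof -
  have q: "0 \<le> min x y / max x y" "min x y / max x y \<le> 1" using assms
    by (auto simp: divide_le_eq_1 min_def max_def)
  show "0 \<le> max x y * g (min x y / max x y)" using CC_nonneg[OF assms(1) q(1)] assms by simp
  have "g (min x y / max x y) \<le> g 0" using CC_dec[OF assms(1) order_refl q(1,2)] .
  thus "max x y * g (min x y / max x y) \<le> max x y * g 0" using assms by (simp add: mult_left_mono)
qed

lemma P_cont: assumes g: "CC g"
  shows "continuous_on ({0..} \<times> {0..}) (\<lambda>z. P g (fst z) (snd z))"
proof -
  let ?D = "{0..} \<times> {0..} :: (real \<times> real) set"
  define Pm where "Pm = (\<lambda>z::real\<times>real. max (fst z) (snd z) * g (min (fst z) (snd z) / max (fst z) (snd z)))"
  have eq: "\<And>z. z \<in> ?D \<Longrightarrow> P g (fst z) (snd z) = Pm z"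
    unfolding Pm_def using P_maxmin[OF g] by auto
  have "continuous_on ?D Pm"
    unfolding continuous_on_eq_continuous_within
  proof
    fix z assume z: "z \<in> ?D"
    show "continuous (at z within ?D) Pm"
    proof (cases "z = (0,0)")
      case True
      have Pz: "Pm z = 0" using True by (simp add: Pm_def)
      have "((\<lambda>y. max (fst y) (snd y) * g 0) \<longlongrightarrow> max (fst z) (snd z) * g 0) (at z within ?D)"
        by (intro tendsto_intros)
      hence lim: "((\<lambda>y. max (fst y) (snd y) * g 0) \<longlongrightarrow> 0) (at z within ?D)" using True by simp
      have "(Pm \<longlongrightarrow> 0) (at z within ?D)"
      proof (rule tendsto_sandwich[OF _ _ tendsto_const lim])
        show "\<forall>\<^sub>F y in at z within ?D. 0 \<le> Pm y"
          by (rule ev_within) (auto simp: Pm_def intro!: Pm_le(1)[OF g])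
        show "\<forall>\<^sub>F y in at z within ?D. Pm y \<le> max (fst y) (snd y) * g 0"
          by (rule ev_within) (auto simp: Pm_def intro!: Pm_le(2)[OF g])
      qed
      thus ?thesis using Pz by (simp add: continuous_within)
    next
      case False
      have mz: "max (fst z) (snd z) \<noteq> 0" using z False by (cases z) (auto simp: max_def)
      have inner: "((\<lambda>y. min (fst y) (snd y) / max (fst y) (snd y)) \<longlongrightarrow> min (fst z) (snd z) / max (fst z) (snd z)) (at z within ?D)"
        using mz by (intro tendsto_intros) auto
      have inz: "min (fst z) (snd z) / max (fst z) (snd z) \<in> {0..}" using z by auto
      have ev: "\<forall>\<^sub>F y in at z within ?D. min (fst y) (snd y) / max (fst y) (snd y) \<in> {0..}"
        by (rule ev_within) auto
      have "((\<lambda>y. g (min (fst y) (snd y) / max (fst y) (snd y))) \<longlongrightarrow> g (min (fst z) (snd z) / max (fst z) (snd z))) (at z within ?D)"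
        by (rule continuous_on_tendsto_compose[OF CC_cont[OF g] inner inz ev])
      hence "(Pm \<longlongrightarrow> Pm z) (at z within ?D)" unfolding Pm_def
        by (intro tendsto_intros) auto
      thus ?thesis by (simp add: continuous_within)
    qed
  qed
  moreover have "continuous_on ?D (\<lambda>z. P g (fst z) (snd z)) = continuous_on ?D Pm"
    by (rule continuous_on_cong) (auto simp: eq)
  ultimately show ?thesis by simp
qed

lemma P_cont1: assumes g: "CC g" "0 \<le> y"
  shows "continuous_on {0..} (\<lambda>x. P g x y)"
proof -
  have "continuous_on {0..} ((\<lambda>z. P g (fst z) (snd z)) \<circ> (\<lambda>x. (x, y)))"
    by (rule continuous_on_compose) (auto intro!: continuous_intros continuous_on_subset[OF P_cont[OF g(1)]] simp: g)
  thus ?thesis by (simp add: o_def)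
qed

lemma P_cont2: assumes g: "CC g" "0 \<le> x"
  shows "continuous_on {0..} (\<lambda>y. P g x y)"
proof -
  have "continuous_on {0..} ((\<lambda>z. P g (fst z) (snd z)) \<circ> (\<lambda>y. (x, y)))"
    by (rule continuous_on_compose) (auto intro!: continuous_intros continuous_on_subset[OF P_cont[OF g(1)]] simp: g)
  thus ?thesis by (simp add: o_def)
qed

lemma recF_bound: assumes g: "CC g" "0 \<le> r" "0 < al"
  shows "g (1 + al * r) / al \<le> r * g 0"
proof (cases "r = 0")
  case True thus ?thesis using CC_1[OF g(1)] by simp
next
  case False
  define X where "X = 1 + al * r"
  have X: "X > 1" using g False by (simp add: X_def)
  have "g X = X * g (1/X)" using CC_sym[OF g(1), of X] X by simp
  also have "\<dots> \<le> X * ((1 - 1/X) * g 0)"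
    using CC_le0[OF g(1), of "1/X"] X by (intro mult_left_mono) auto
  also have "\<dots> = (X - 1) * g 0" using X by (simp add: field_simps)
  also have "\<dots> = al * r * g 0" by (simp add: X_def)
  finally have "g (1 + al*r) \<le> al * (r * g 0)" by (simp add: X_def mult.assoc)
  thus ?thesis using g by (simp add: divide_le_eq mult.commute)
qed

lemma recF_lim: assumes g: "CC g" "0 \<le> r"
  shows "((\<lambda>al. g (1 + al * r) / al) \<longlongrightarrow> r * g 0) at_top"
proof (cases "r = 0")
  case True thus ?thesis using CC_1[OF g(1)] by simp
next
  case False
  hence r: "r > 0" using g by simp
  have ev: "\<forall>\<^sub>F al in at_top. g (1 + al * r) / al = (1/al + r) * g (1 / (1 + al * r))"
    using eventually_gt_at_top[of 0]
  proof eventually_elim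
    case (elim al)
    have pos: "1 + al*r > 0" using elim r by (simp add: add_pos_pos)
    have "g (1 + al*r) = (1 + al*r) * g (1/(1+al*r))" using CC_sym[OF g(1) pos] .
    thus ?case using elim by (simp add: field_simps)
  qed
  have t0: "((\<lambda>al::real. 1/al) \<longlongrightarrow> 0) at_top"
    using tendsto_inverse_0_at_top[OF filterlim_ident] by (simp add: inverse_eq_divide)
  have t1: "((\<lambda>al::real. 1/al + r) \<longlongrightarrow> 0 + r) at_top"
    by (intro tendsto_intros t0)
  have fl: "filterlim (\<lambda>al. 1 + al * r) at_top at_top"
    by (rule filterlim_tendsto_add_at_top[OF tendsto_const])
       (rule filterlim_at_top_mult_tendsto_pos[OF tendsto_const r filterlim_ident])
  have t2: "((\<lambda>al. 1 / (1 + al * r)) \<longlongrightarrow> 0) at_top"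
    using tendsto_inverse_0_at_top[OF fl] by (simp add: inverse_eq_divide)
  have ev2: "\<forall>\<^sub>F al in at_top. 1 / (1 + al * r) \<in> {0..}"
    using eventually_gt_at_top[of 0] by eventually_elim (use r in simp)
  have t3: "((\<lambda>al. g (1 / (1 + al * r))) \<longlongrightarrow> g 0) at_top"
    by (rule continuous_on_tendsto_compose[OF CC_cont[OF g(1)] t2 _ ev2]) simp
  have "((\<lambda>al. (1/al + r) * g (1 / (1 + al * r))) \<longlongrightarrow> (0 + r) * g 0) at_top"
    by (rule tendsto_mult[OF t1 t3])
  thus ?thesis using tendsto_cong[OF ev] by simp
qed

lemma recF_SUP:
  assumes g: "\<And>n. CC (g n)" and G: "\<And>x. 0 \<le> x \<Longrightarrow> G x = (SUP n. ereal (g n x))" and r: "0 \<le> r"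
  shows "recF G r = (SUP n. ereal (r * g n 0))"
proof -
  let ?L = "SUP n. ereal (r * g n 0)"
  have ev: "\<forall>\<^sub>F al in at_top. G (1 + al * r) / ereal al = (SUP n. ereal (g n (1 + al * r) / al))"
    using eventually_gt_at_top[of 0]
  proof eventually_elim
    case (elim al)
    have "G (1 + al * r) = (SUP n. ereal (g n (1 + al * r)))" using G elim r by simp
    hence "G (1 + al * r) / ereal al = ereal (1/al) * (SUP n. ereal (g n (1 + al * r)))"
      using elim by (simp add: divide_ereal_def inverse_eq_divide mult.commute)
    also have "\<dots> = (SUP n. ereal (1/al) * ereal (g n (1 + al * r)))"
      using elim r by (subst SUP_ereal_mult_left) (auto intro!: CC_nonneg[OF g])
    also have "\<dots> = (SUP n. ereal (g n (1 + al * r) / al))" by simp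
    finally show ?case .
  qed
  have "((\<lambda>al. G (1 + al * r) / ereal al) \<longlongrightarrow> ?L) at_top"
  proof (subst tendsto_cong[OF ev], rule order_tendstoI)
    fix y assume "y < ?L"
    then obtain n where n: "y < ereal (r * g n 0)" by (auto simp: less_SUP_iff)
    have "((\<lambda>al. ereal (g n (1 + al * r) / al)) \<longlongrightarrow> ereal (r * g n 0)) at_top"
      using recF_lim[OF g r] by (rule tendsto_ereal)
    hence "\<forall>\<^sub>F al in at_top. y < ereal (g n (1 + al * r) / al)" using n by (rule order_tendstoD)
    thus "\<forall>\<^sub>F al in at_top. y < (SUP n. ereal (g n (1 + al * r) / al))"
      by eventually_elim (auto simp: less_SUP_iff)
  next
    fix y assume y: "?L < y"
    show "\<forall>\<^sub>F al in at_top. (SUP n. ereal (g n (1 + al * r) / al)) < y"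
      using eventually_gt_at_top[of 0]
    proof eventually_elim
      case (elim al)
      have "(SUP n. ereal (g n (1 + al * r) / al)) \<le> ?L"
        using recF_bound[OF g r elim] by (intro SUP_mono) auto
      thus ?case using y by simp
    qed
  qed
  thus ?thesis unfolding recF_def by (intro tendsto_Lim) auto
qed

lemma recF_single: assumes g: "CC g" and G: "\<And>x. 0 \<le> x \<Longrightarrow> G x = ereal (g x)" and r: "0 \<le> r"
  shows "recF G r = ereal (r * g 0)"
  using recF_SUP[of "\<lambda>n. g" G r] assms by simp

lemma persp_single: assumes g: "CC g" and G: "\<And>x. 0 \<le> x \<Longrightarrow> G x = ereal (g x)" and "0 \<le> x" "0 \<le> y"
  shows "persp G x y = ereal (P g x y)"
  using assms recF_single[OF g G] by (auto simp: persp_def P_def)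



definition H :: "(real \<Rightarrow> real) \<Rightarrow> real \<Rightarrow> real \<Rightarrow> real" where
  "H g r1 r2 = Inf ((\<lambda>th. P g th r1 + P g th r2) ` {0<..})"

lemma H_bdd: assumes "CC g" "0 \<le> r1" "0 \<le> r2"
  shows "bdd_below ((\<lambda>th. P g th r1 + P g th r2) ` {0<..})"
  by (rule bdd_belowI[of _ 0]) (use assms in \<open>auto intro!: add_nonneg_nonneg P_nonneg\<close>)

lemma H_le: assumes "CC g" "0 \<le> r1" "0 \<le> r2" "0 < th"
  shows "H g r1 r2 \<le> P g th r1 + P g th r2"
  unfolding H_def by (rule cInf_lower[OF _ H_bdd[OF assms(1-3)]]) (use assms in auto)

lemma H_ge: assumes "\<And>th. 0 < th \<Longrightarrow> c \<le> P g th r1 + P g th r2"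
  shows "c \<le> H g r1 r2"
  unfolding H_def by (rule cInf_greatest) (use assms in auto)

lemma H_nonneg: assumes "CC g" "0 \<le> r1" "0 \<le> r2" shows "0 \<le> H g r1 r2"
  by (rule H_ge) (use assms in \<open>auto intro!: add_nonneg_nonneg P_nonneg\<close>)

lemma H_sym: "H g r1 r2 = H g r2 r1"
  unfolding H_def by (simp add: add.commute)

lemma H_hom: assumes g: "CC g" "0 \<le> r1" "0 \<le> r2" "0 < l"
  shows "H g (l*r1) (l*r2) = l * H g r1 r2"
proof (rule antisym)
  have "H g (l*r1) (l*r2) / l \<le> H g r1 r2"
  proof (rule H_ge)
    fix th :: real assume th: "0 < th"
    have "H g (l*r1) (l*r2) \<le> P g (l*th) (l*r1) + P g (l*th) (l*r2)"
      using g th by (intro H_le) auto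
    also have "\<dots> = l * (P g th r1 + P g th r2)" using g by (simp add: P_hom distrib_left)
    finally show "H g (l*r1) (l*r2) / l \<le> P g th r1 + P g th r2" using g by (simp add: divide_le_eq mult.commute)
  qed
  thus "H g (l*r1) (l*r2) \<le> l * H g r1 r2" using g by (simp add: divide_le_eq mult.commute)
next
  show "l * H g r1 r2 \<le> H g (l*r1) (l*r2)"
  proof (rule H_ge)
    fix th :: real assume th: "0 < th"
    have "l * H g r1 r2 \<le> l * (P g (th/l) r1 + P g (th/l) r2)"
      using g th by (intro mult_left_mono H_le) auto
    also have "\<dots> = P g th (l*r1) + P g th (l*r2)"
      using P_hom[OF g(4), where x="th/l" and y=r1 and g=g] P_hom[OF g(4), where x="th/l" and y=r2 and g=g] g by (simp add: distrib_left)
    finally show "l * H g r1 r2 \<le> P g th (l*r1) + P g th (l*r2)" .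
  qed
qed

lemma P_mono: assumes "\<And>x. 0 \<le> x \<Longrightarrow> g x \<le> g' x" "0 \<le> x" "0 \<le> y"
  shows "P g x y \<le> P g' x y"
  using assms by (auto simp: P_def intro!: mult_left_mono)

lemma H_mono: assumes "CC g" "\<And>x. 0 \<le> x \<Longrightarrow> g x \<le> g' x" "0 \<le> r1" "0 \<le> r2"
  shows "H g r1 r2 \<le> H g' r1 r2"
proof (rule H_ge)
  fix th :: real assume th: "0 < th"
  have "H g r1 r2 \<le> P g th r1 + P g th r2" using assms th by (intro H_le) auto
  also have "\<dots> \<le> P g' th r1 + P g' th r2" using assms th by (intro add_mono P_mono) auto
  finally show "H g r1 r2 \<le> P g' th r1 + P g' th r2" .
qed

lemma H_11: assumes "CC g" shows "H g 1 1 = 0"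
proof (rule antisym)
  show "H g 1 1 \<le> 0" using H_le[OF assms, of 1 1 1] P_diag[OF assms, of 1] by simp
  show "0 \<le> H g 1 1" using H_nonneg[OF assms] by simp
qed

lemma Htilde_single: assumes g: "CC g" and G: "\<And>x. 0 \<le> x \<Longrightarrow> G x = ereal (g x)"
  and r: "0 \<le> r1" "0 \<le> r2"
  shows "Htilde G (r1, r2) = ereal (H g r1 r2)"
proof -
  have "Htilde G (r1, r2) = (INF th\<in>{0<..}. ereal (P g th r1 + P g th r2))"
    unfolding Htilde_def using persp_single[OF g G] r by (intro INF_cong) auto
  also have "\<dots> = ereal (H g r1 r2)"
    unfolding H_def by (subst ereal_Inf'[OF H_bdd[OF g r]]) (auto simp: image_comp)
  finally show ?thesis .
qed



lemma H_cont: assumes g: "CC g" and g2: "0 < g 2"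
  shows "continuous_on {0..} (\<lambda>s. H g 1 s)"
  unfolding continuous_on_eq_continuous_within
proof
  fix s0 :: real assume "s0 \<in> {0..}"
  hence s0: "0 \<le> s0" by simp
  define Phi where "Phi = (\<lambda>z::real\<times>real. P g (fst z) 1 + P g (fst z) (snd z))"
  have Phi_cont: "continuous_on ({0..} \<times> {0..}) Phi"
  proof -
    have c1: "continuous_on ({0..} \<times> {0..}) (\<lambda>z::real\<times>real. P g (fst z) 1)"
    proof -
      have "continuous_on ({0..} \<times> {0..}) ((\<lambda>z. P g (fst z) (snd z)) \<circ> (\<lambda>z::real\<times>real. (fst z, 1)))"
        by (rule continuous_on_compose) (auto intro!: continuous_intros continuous_on_subset[OF P_cont[OF g]])
      thus ?thesis by (simp add: o_def)
    qed
    show ?thesis unfolding Phi_def by (intro continuous_intros c1 P_cont[OF g])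
  qed
  have hle: "H g 1 s \<le> Phi (th, s)" if "0 < th" "0 \<le> s" for th s
    unfolding Phi_def using H_le[OF g, of 1 s th] that by simp
  show "continuous (at s0 within {0..}) (\<lambda>s. H g 1 s)"
    unfolding continuous_within
  proof (rule order_tendstoI)
    fix y assume y: "H g 1 s0 < y"
    have "\<exists>x\<in>(\<lambda>th. P g th 1 + P g th s0) ` {0<..}. x < y"
      by (rule cInf_lessD) (use y in \<open>auto simp: H_def\<close>)
    then obtain th0 where th0: "0 < th0" "P g th0 1 + P g th0 s0 < y" by auto
    have "continuous_on {0..} (\<lambda>s. P g th0 1 + P g th0 s)"
      using P_cont2[OF g, of th0] th0 by (intro continuous_intros) auto
    hence "((\<lambda>s. P g th0 1 + P g th0 s) \<longlongrightarrow> P g th0 1 + P g th0 s0) (at s0 within {0..})"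
      using s0 by (simp add: continuous_on_def)
    hence "\<forall>\<^sub>F s in at s0 within {0..}. P g th0 1 + P g th0 s < y" using th0(2) by (rule order_tendstoD(2))
    moreover have "\<forall>\<^sub>F s in at s0 within {0..}. s \<in> {0..}" by (rule ev_within) auto
    ultimately show "\<forall>\<^sub>F s in at s0 within {0..}. H g 1 s < y"
    proof eventually_elim
      case (elim s) thus ?case using hle[of th0 s] th0 unfolding Phi_def by simp
    qed
  next
    fix y assume y: "y < H g 1 s0"
    define e where "e = H g 1 s0 - y"
    have e: "0 < e" using y by (simp add: e_def)
    define B where "B = max 2 (1 + (H g 1 s0 + 1) / g 2)"
    have B1: "2 \<le> B" "1 + (H g 1 s0 + 1) / g 2 \<le> B" by (auto simp: B_def)
    hence "(H g 1 s0 + 1) / g 2 \<le> B - 1" by simp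
    hence "H g 1 s0 + 1 \<le> (B - 1) * g 2" using g2 by (simp add: pos_divide_le_eq)
    hence B: "2 \<le> B" "(B - 1) * g 2 \<ge> H g 1 s0 + 1" using B1 by auto
    define K where "K = {0..B} \<times> {0..s0+1}"
    have "compact K" unfolding K_def by (intro compact_Times compact_Icc)
    moreover have "continuous_on K Phi" by (rule continuous_on_subset[OF Phi_cont]) (auto simp: K_def)
    ultimately have "uniformly_continuous_on K Phi" using compact_uniformly_continuous by blast
    then obtain d where d: "d > 0" "\<And>z z'. z \<in> K \<Longrightarrow> z' \<in> K \<Longrightarrow> dist z' z < d \<Longrightarrow> dist (Phi z') (Phi z) < e/2"
      unfolding uniformly_continuous_on_def using e by (metis half_gt_zero)
    have "\<forall>\<^sub>F s in at s0 within {0..}. H g 1 s0 - e/2 \<le> H g 1 s"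
      unfolding eventually_at
    proof (intro exI[of _ "min d 1"] conjI ballI impI)
      show "0 < min d 1" using d by simp
      fix s assume s: "s \<in> {0..}" "s \<noteq> s0 \<and> dist s s0 < min d 1"
      show "H g 1 s0 - e/2 \<le> H g 1 s"
      proof (rule H_ge)
        fix th :: real assume th: "0 < th"
        show "H g 1 s0 - e/2 \<le> P g th 1 + P g th s"
        proof (cases "th \<le> B")
          case True
          have inK: "(th, s) \<in> K" "(th, s0) \<in> K" using True th s s0 by (auto simp: K_def dist_real_def)
          have "dist (th, s) (th, s0) < d" using s by (simp add: dist_Pair_Pair)
          hence "dist (Phi (th, s)) (Phi (th, s0)) < e/2" using d(2)[OF inK(2) inK(1)] by simp
          hence "\<bar>Phi (th, s) - Phi (th, s0)\<bar> < e/2" by (simp add: dist_real_def)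
          hence "Phi (th, s0) - e/2 \<le> Phi (th, s)" by arith
          moreover have "H g 1 s0 \<le> Phi (th, s0)" using hle th s0 by simp
          ultimately show ?thesis by (simp add: Phi_def)
        next
          case False
          have "H g 1 s0 + 1 \<le> (B - 1) * g 2" using B by simp
          also have "\<dots> \<le> (th - 1) * g 2" using False g2 by (intro mult_right_mono) auto
          also have "\<dots> \<le> g th" using CC_grow[OF g, of th] False B by simp
          also have "\<dots> = P g th 1" by (simp add: P_1)
          also have "\<dots> \<le> P g th 1 + P g th s" using P_nonneg[OF g, of th s] th s by simp
          finally show ?thesis using e by simp
        qed
      qed
    qed
    thus "\<forall>\<^sub>F s in at s0 within {0..}. y < H g 1 s"
    proof eventually_elim
      case (elim s) thus ?case using y e_def by linarith
    qed
  qed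
qed

lemma env_eq: assumes "p \<in> D" "lsc_within D k" "\<And>q. q \<in> D \<Longrightarrow> k q \<le> g q" "k p = g p"
  shows "lsc_envelope D g p = g p"
  unfolding lsc_envelope_def
proof (rule antisym)
  show "(SUP h\<in>{h. lsc_within D h \<and> (\<forall>q\<in>D. h q \<le> g q)}. h p) \<le> g p"
    using assms(1) by (intro SUP_least) auto
  have "k p \<le> (SUP h\<in>{h. lsc_within D h \<and> (\<forall>q\<in>D. h q \<le> g q)}. h p)"
    by (rule SUP_upper) (use assms in auto)
  thus "g p \<le> (SUP h\<in>{h. lsc_within D h \<and> (\<forall>q\<in>D. h q \<le> g q)}. h p)" using assms(4) by simp
qed

lemma env_le: "p \<in> D \<Longrightarrow> lsc_envelope D g p \<le> g p"
  unfolding lsc_envelope_def by (intro SUP_least) auto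

lemma env_mono: "(\<And>q. q \<in> D \<Longrightarrow> g q \<le> g' q) \<Longrightarrow> lsc_envelope D g p \<le> lsc_envelope D g' p"
  unfolding lsc_envelope_def by (rule SUP_subset_mono) (auto intro: order_trans)

lemma HF_single: assumes g: "CC g" "0 < g 2" and G: "\<And>x. 0 \<le> x \<Longrightarrow> G x = ereal (g x)"
  and s: "0 \<le> s"
  shows "HF G 1 s = ereal (H g 1 s)"
proof -
  let ?D = "{0..} \<times> {0..} :: (real \<times> real) set"
  define k where "k = (\<lambda>q::real\<times>real. if fst q > 0 then ereal (fst q * H g 1 (snd q / fst q)) else 0)"
  have k_nonneg: "0 \<le> k q" if "q \<in> ?D" for q
    using that H_nonneg[OF g(1), of 1 "snd q / fst q"] by (auto simp: k_def)
  have "lsc_within ?D k"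
    unfolding lsc_within_def le_Liminf_iff
  proof (intro ballI allI impI)
    fix q y assume q: "q \<in> ?D" and y: "y < k q"
    have evD: "\<forall>\<^sub>F z in at q within ?D. z \<in> ?D" by (rule ev_within) auto
    show "\<forall>\<^sub>F z in at q within ?D. y < k z"
    proof (cases "fst q > 0")
      case False
      hence "y < 0" using y by (simp add: k_def)
      have y0: "y < 0" by fact
      show ?thesis using evD by eventually_elim (use y0 k_nonneg in force)
    next
      case True
      have inner: "((\<lambda>z. snd z / fst z) \<longlongrightarrow> snd q / fst q) (at q within ?D)"
        using True by (intro tendsto_intros) auto
      have ev0: "\<forall>\<^sub>F z in at q within ?D. snd z / fst z \<in> {0..}" by (rule ev_within) auto
      have "((\<lambda>z. H g 1 (snd z / fst z)) \<longlongrightarrow> H g 1 (snd q / fst q)) (at q within ?D)"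
        by (rule continuous_on_tendsto_compose[OF H_cont[OF g] inner _ ev0]) (use q True in auto)
      hence "((\<lambda>z. fst z * H g 1 (snd z / fst z)) \<longlongrightarrow> fst q * H g 1 (snd q / fst q)) (at q within ?D)"
        by (intro tendsto_intros)
      hence "((\<lambda>z. ereal (fst z * H g 1 (snd z / fst z))) \<longlongrightarrow> k q) (at q within ?D)"
        using True by (simp add: k_def)
      hence ev1: "\<forall>\<^sub>F z in at q within ?D. y < ereal (fst z * H g 1 (snd z / fst z))"
        using y by (rule order_tendstoD)
      have "((\<lambda>z. fst z) \<longlongrightarrow> fst q) (at q within ?D)" by (intro tendsto_intros)
      hence ev2: "\<forall>\<^sub>F z in at q within ?D. 0 < fst z" using True by (rule order_tendstoD)
      from ev1 ev2 show ?thesis by eventually_elim (simp add: k_def)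
    qed
  qed
  moreover have "k q \<le> Htilde G q" if q: "q \<in> ?D" for q
  proof (cases "fst q > 0")
    case True
    have "H g (fst q * 1) (fst q * (snd q / fst q)) = fst q * H g 1 (snd q / fst q)"
      using True q by (intro H_hom[OF g(1)]) auto
    hence "fst q * H g 1 (snd q / fst q) = H g (fst q) (snd q)" using True by simp
    moreover have "Htilde G q = ereal (H g (fst q) (snd q))"
      using Htilde_single[OF g(1) G, of "fst q" "snd q"] q by (cases q) auto
    ultimately show ?thesis using True by (simp add: k_def)
  next
    case False
    have "Htilde G q = ereal (H g (fst q) (snd q))"
      using Htilde_single[OF g(1) G, of "fst q" "snd q"] q by (cases q) auto
    thus ?thesis using False H_nonneg[OF g(1), of "fst q" "snd q"] q by (auto simp: k_def)
  qed
  moreover have "k (1, s) = Htilde G (1, s)"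
    using Htilde_single[OF g(1) G, of 1 s] s by (simp add: k_def)
  ultimately have "lsc_envelope ?D (Htilde G) (1, s) = Htilde G (1, s)"
    by (intro env_eq[of _ _ k]) (use s in auto)
  thus ?thesis unfolding HF_def using Htilde_single[OF g(1) G, of 1 s] s by simp
qed

lemma Ta_single: assumes g: "CC g" "0 < g 2" and G: "\<And>x. 0 \<le> x \<Longrightarrow> G x = ereal (g x)"
  and s: "0 \<le> s"
  shows "Ta a G s = ereal (2 powr (1/a - 1) * H g 1 s)"
  using HF_single[OF assms] by (simp add: Ta_def)



lemma P_jconv: assumes g: "CC g" and x: "0 \<le> x1" "0 \<le> x2" and y: "0 < y1" "0 < y2" and t: "0 \<le> t" "t \<le> 1"
  shows "P g (t*x1 + (1-t)*x2) (t*y1 + (1-t)*y2) \<le> t * P g x1 y1 + (1-t) * P g x2 y2"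
proof -
  define Y where "Y = t*y1 + (1-t)*y2"
  have Y: "0 < Y"
  proof (cases "t = 0")
    case True thus ?thesis using y by (simp add: Y_def)
  next
    case False
    hence "0 < t*y1" using t y by simp
    moreover have "0 \<le> (1-t)*y2" using t y by simp
    ultimately show ?thesis by (simp add: Y_def)
  qed
  define l where "l = t*y1/Y"
  have l: "0 \<le> l" "l \<le> 1" "1 - l = (1-t)*y2/Y"
    using Y t y by (auto simp: l_def Y_def field_simps)
  have eq: "(t*x1 + (1-t)*x2) / Y = l*(x1/y1) + (1-l)*(x2/y2)"
    using Y y unfolding l(3) by (simp add: l_def field_simps)
  have "g ((t*x1 + (1-t)*x2) / Y) \<le> l * g (x1/y1) + (1-l) * g (x2/y2)"
    unfolding eq using x y l by (intro cvxD CC_cvx[OF g]) auto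
  hence "Y * g ((t*x1 + (1-t)*x2) / Y) \<le> Y * (l * g (x1/y1) + (1-l) * g (x2/y2))"
    using Y by (intro mult_left_mono) auto
  also have "\<dots> = t * (y1 * g (x1/y1)) + (1-t) * (y2 * g (x2/y2))"
    using Y unfolding l(3) by (simp add: l_def field_simps)
  finally show ?thesis using Y y by (simp add: P_def Y_def)
qed

lemma H_conv_pos: assumes g: "CC g" and s: "0 < s1" "0 < s2" and t: "0 \<le> t" "t \<le> 1"
  shows "H g 1 (t * s1 + (1-t) * s2) \<le> t * H g 1 s1 + (1-t) * H g 1 s2"
proof (rule field_le_epsilon)
  fix e :: real assume e: "0 < e"
  have "\<exists>x\<in>(\<lambda>th. P g th 1 + P g th s1) ` {0<..}. x < H g 1 s1 + e"
    by (rule cInf_lessD) (use e in \<open>auto simp: H_def\<close>)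
  then obtain th1 where th1: "0 < th1" "P g th1 1 + P g th1 s1 < H g 1 s1 + e" by auto
  have "\<exists>x\<in>(\<lambda>th. P g th 1 + P g th s2) ` {0<..}. x < H g 1 s2 + e"
    by (rule cInf_lessD) (use e in \<open>auto simp: H_def\<close>)
  then obtain th2 where th2: "0 < th2" "P g th2 1 + P g th2 s2 < H g 1 s2 + e" by auto
  define th where "th = t*th1 + (1-t)*th2"
  have thpos: "0 < th"
  proof (cases "t = 0")
    case True thus ?thesis using th2 by (simp add: th_def)
  next
    case False
    hence "0 < t*th1" using t th1 by simp
    moreover have "0 \<le> (1-t)*th2" using t th2 by simp
    ultimately show ?thesis by (simp add: th_def)
  qed
  have s0: "0 \<le> t * s1 + (1-t) * s2" using s t by simp
  have h0: "H g 1 (t * s1 + (1-t) * s2) \<le> P g th 1 + P g th (t * s1 + (1-t) * s2)"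
    using H_le[OF g _ s0 thpos] by simp
  have "P g th 1 = P g (t*th1 + (1-t)*th2) (t*1 + (1-t)*1)" by (simp add: th_def)
  also have "\<dots> \<le> t * P g th1 1 + (1-t) * P g th2 1"
    using th1 th2 t by (intro P_jconv[OF g]) auto
  finally have h1: "P g th 1 \<le> t * P g th1 1 + (1-t) * P g th2 1" .
  have h2: "P g th (t * s1 + (1-t) * s2) \<le> t * P g th1 s1 + (1-t) * P g th2 s2"
    unfolding th_def using th1 th2 t s by (intro P_jconv[OF g]) auto
  have h3: "t * (P g th1 1 + P g th1 s1) \<le> t * (H g 1 s1 + e)" using th1 t by (intro mult_left_mono) auto
  have h4: "(1-t) * (P g th2 1 + P g th2 s2) \<le> (1-t) * (H g 1 s2 + e)" using th2 t by (intro mult_left_mono) auto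
  have "H g 1 (t * s1 + (1-t) * s2) \<le> t * (H g 1 s1 + e) + (1-t) * (H g 1 s2 + e)"
    using h0 h1 h2 h3 h4 by (simp add: algebra_simps)
  also have "\<dots> = t * H g 1 s1 + (1-t) * H g 1 s2 + e" by (simp add: algebra_simps)
  finally show "H g 1 (t * s1 + (1-t) * s2) \<le> t * H g 1 s1 + (1-t) * H g 1 s2 + e" .
qed

lemma tendsto_shift_right: fixes f :: "real \<Rightarrow> real" and z :: real assumes f: "continuous_on {0..} f" and z: "0 \<le> z"
  shows "((\<lambda>e. f (z + e)) \<longlongrightarrow> f z) (at_right 0)"
proof -
  have inner: "((\<lambda>e::real. z + e) \<longlongrightarrow> z + 0) (at_right 0)"
    by (intro tendsto_intros)
  have ev: "\<forall>\<^sub>F e in at_right 0. z + e \<in> {0..}"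
    unfolding eventually_at_right_field using z by (intro exI[of _ 1]) auto
  show ?thesis using continuous_on_tendsto_compose[OF f inner _ ev] z by simp
qed

lemma cvx_closure: assumes f: "continuous_on {0..} f"
  and c: "\<And>x y t. 0 < x \<Longrightarrow> 0 < y \<Longrightarrow> 0 \<le> t \<Longrightarrow> t \<le> 1 \<Longrightarrow> f (t*x + (1-t)*y) \<le> t * f x + (1-t) * f y"
  shows "cvx f"
  unfolding cvx_def
proof (intro allI impI)
  fix x y t :: real assume xy: "0 \<le> x" "0 \<le> y" and t: "0 \<le> t \<and> t \<le> 1"
  have z: "0 \<le> t*x + (1-t)*y" using xy t by simp
  have l1: "((\<lambda>e. f (t*x + (1-t)*y + e)) \<longlongrightarrow> f (t*x + (1-t)*y)) (at_right 0)"
    by (rule tendsto_shift_right[OF f z])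
  have l2: "((\<lambda>e. t * f (x + e) + (1-t) * f (y + e)) \<longlongrightarrow> t * f x + (1-t) * f y) (at_right 0)"
    by (intro tendsto_intros tendsto_shift_right[OF f] xy)
  have ev: "\<forall>\<^sub>F e in at_right 0. f (t*x + (1-t)*y + e) \<le> t * f (x + e) + (1-t) * f (y + e)"
  proof -
    have "f (t*x + (1-t)*y + e) \<le> t * f (x + e) + (1-t) * f (y + e)" if e: "0 < e" for e
    proof -
      have "t*(x+e) + (1-t)*(y+e) = t*x + (1-t)*y + e" by (simp add: algebra_simps)
      moreover have "f (t*(x+e) + (1-t)*(y+e)) \<le> t * f (x+e) + (1-t) * f (y+e)"
        using xy e t by (intro c) auto
      ultimately show ?thesis by simp
    qed
    thus ?thesis unfolding eventually_at_right_field by (intro exI[of _ 1]) auto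
  qed
  show "f (t*x + (1-t)*y) \<le> t * f x + (1-t) * f y"
    by (rule tendsto_le[OF trivial_limit_at_right_real l2 l1 ev])
qed

lemma CC_step: assumes g: "CC g" "0 < g 2" and c: "0 < c"
  shows "CC (\<lambda>s. c * H g 1 s)"
  unfolding CC_def
proof (intro conjI allI impI)
  show "0 \<le> c * H g 1 x" if "0 \<le> x" for x using H_nonneg[OF g(1), of 1 x] that c by simp
  show "c * H g 1 1 = 0" using H_11[OF g(1)] by simp
  show cont: "continuous_on {0..} (\<lambda>s. c * H g 1 s)"
    by (intro continuous_intros H_cont[OF g])
  show "c * H g 1 s = s * (c * H g 1 (1 / s))" if s: "0 < s" for s
  proof -
    have "H g 1 s = H g s 1" by (rule H_sym)
    also have "\<dots> = H g (s*1) (s*(1/s))" using s by simp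
    also have "\<dots> = s * H g 1 (1/s)" using s by (intro H_hom[OF g(1)]) auto
    finally show ?thesis by simp
  qed
  show "cvx (\<lambda>s. c * H g 1 s)"
  proof (rule cvx_closure[OF cont])
    fix x y t :: real assume "0 < x" "0 < y" "0 \<le> t" "t \<le> 1"
    hence "H g 1 (t*x + (1-t)*y) \<le> t * H g 1 x + (1-t) * H g 1 y" by (intro H_conv_pos[OF g(1)])
    hence "c * H g 1 (t*x + (1-t)*y) \<le> c * (t * H g 1 x + (1-t) * H g 1 y)" using c by simp
    thus "c * H g 1 (t*x + (1-t)*y) \<le> t * (c * H g 1 x) + (1-t) * (c * H g 1 y)" by (simp add: algebra_simps)
  qed
qed



lemma cvx_convex_on: assumes "cvx g" shows "convex_on {0<..} g"
  unfolding convex_on_def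
proof (intro conjI ballI allI impI)
  show "convex {0::real<..}" by simp
  fix x y u v :: real assume xy: "x \<in> {0<..}" "y \<in> {0<..}" and uv: "0 \<le> u" "0 \<le> v" "u + v = 1"
  have v: "v = 1 - u" using uv by simp
  show "g (u *\<^sub>R x + v *\<^sub>R y) \<le> u * g x + v * g y"
    using cvxD[OF assms, of x y u] xy uv unfolding v by simp
qed

lemma cont_from_lsc:
  fixes g :: "real \<Rightarrow> real"
  assumes c: "cvx g" and lsc: "\<And>e. 0 < e \<Longrightarrow> \<forall>\<^sub>F x in at 0 within {0..}. g 0 - e < g x"
  shows "continuous_on {0..} g"
  unfolding continuous_on_eq_continuous_within
proof
  fix x :: real assume x: "x \<in> {0..}"
  have ci: "continuous_on {0<..} g" by (rule convex_on_continuous[OF _ cvx_convex_on[OF c]]) simp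
  show "continuous (at x within {0..}) g"
  proof (cases "x = 0")
    case False
    hence "x \<in> {0<..}" using x by simp
    hence "continuous (at x) g" using ci by (simp add: continuous_on_eq_continuous_at)
    thus ?thesis by (rule continuous_at_imp_continuous_at_within)
  next
    case True
    show ?thesis unfolding continuous_within True
    proof (rule order_tendstoI)
      fix y assume "y < g 0"
      hence "0 < g 0 - y" by simp
      from lsc[OF this] show "\<forall>\<^sub>F u in at 0 within {0..}. y < g u" by eventually_elim simp
    next
      fix y assume y: "g 0 < y"
      have "((\<lambda>u. (1-u) * g 0 + u * g 1) \<longlongrightarrow> (1-0) * g 0 + 0 * g 1) (at 0 within {0..})"
        by (intro tendsto_intros)
      hence "\<forall>\<^sub>F u in at 0 within {0..}. (1-u) * g 0 + u * g 1 < y" using y by (intro order_tendstoD(2)) auto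
      moreover have "\<forall>\<^sub>F u in at 0 within {0..}. u \<in> {0..}" by (rule ev_within) auto
      moreover have lim0: "((\<lambda>u. u) \<longlongrightarrow> 0) (at (0::real) within {0..})" by (intro tendsto_intros)
      have "\<forall>\<^sub>F u in at 0 within {0..}. u < (1::real)" using order_tendstoD(2)[OF lim0, of 1] by simp
      ultimately show "\<forall>\<^sub>F u in at 0 within {0..}. g u < y"
      proof eventually_elim
        case (elim u)
        have "g (u * 1 + (1-u) * 0) \<le> u * g 1 + (1-u) * g 0" using elim by (intro cvxD[OF c]) auto
        thus ?case using elim by simp
      qed
    qed
  qed
qed

lemma powr_concave2: fixes U V a :: real assumes "0 \<le> U" "0 \<le> V" "0 < a" "a \<le> 1"
  shows "U powr a + V powr a \<le> 2 * ((U + V)/2) powr a"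
proof -
  have key: "W powr a \<le> 2 * (W/2) powr a" if "0 \<le> W" for W :: real
  proof -
    have "W powr a = (2 * (W/2)) powr a" by simp
    also have "\<dots> = 2 powr a * (W/2) powr a" by (rule powr_mult)
    also have "\<dots> \<le> 2 * (W/2) powr a"
    proof (rule mult_right_mono)
      show "2 powr a \<le> 2" using powr_mono[of a 1 2] assms by simp
    qed simp
    finally show ?thesis .
  qed
  show ?thesis
  proof (cases "U = 0 \<or> V = 0")
    case True thus ?thesis using key assms by auto
  next
    case False
    hence UV: "0 < U" "0 < V" using assms by auto
    define p where "p = 1/a"
    have p: "1 \<le> p" using assms by (simp add: p_def)
    have X: "0 < U powr a" "0 < V powr a" using UV by auto
    have "((1 - 1/2) * U powr a + (1/2) * V powr a) powr p \<le> (1 - 1/2) * (U powr a) powr p + (1/2) * (V powr a) powr p"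
      using convex_onD[OF powr_convex[OF p], of "1/2" "U powr a" "V powr a"] X by simp
    also have "\<dots> = (U + V)/2" using assms UV by (simp add: powr_powr p_def)
    finally have h0: "((1 - 1/2) * U powr a + (1/2) * V powr a) powr p \<le> (U + V)/2" .
    have e: "(1 - 1/2) * U powr a + (1/2) * V powr a = (U powr a + V powr a)/2" by simp
    from h0 have h: "((U powr a + V powr a)/2) powr p \<le> (U + V)/2" unfolding e .
    have "(U powr a + V powr a)/2 = (((U powr a + V powr a)/2) powr p) powr a"
      using assms by (simp add: powr_powr p_def)
    also have "\<dots> \<le> ((U + V)/2) powr a" using h assms by (intro powr_mono2) auto
    finally show ?thesis by simp
  qed
qed

lemma base_ineq: assumes g: "CC g" and a: "0 < a" "a < 1"
  and m: "metric_nn (\<lambda>x y. P g x y powr a)" and s: "0 \<le> s"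
  shows "g s \<le> 2 powr (1/a - 1) * H g 1 s"
proof -
  define k where "k = 2 powr (1/a - 1)"
  have k: "0 < k" by (simp add: k_def)
  have "g s / k \<le> H g 1 s"
  proof (rule H_ge)
    fix th :: real assume th: "0 < th"
    define U where "U = P g th 1"
    define V where "V = P g th s"
    have UV: "0 \<le> U" "0 \<le> V" using P_nonneg[OF g] th s by (auto simp: U_def V_def)
    have W: "P g 1 s = g s" using P_1s[OF g s] .
    have tri: "P g 1 s powr a \<le> P g 1 th powr a + P g th s powr a"
      using m th s unfolding metric_nn_def by (metis less_imp_le zero_le_one)
    have "P g 1 th = U" unfolding U_def using P_sym[OF g, of 1 th] th by simp
    hence "g s powr a \<le> U powr a + V powr a" using tri W by (simp add: V_def)
    also have "\<dots> \<le> 2 * ((U + V)/2) powr a" by (rule powr_concave2) (use UV a in auto)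
    finally have h: "g s powr a \<le> 2 * ((U + V)/2) powr a" .
    have gs: "0 \<le> g s" using CC_nonneg[OF g s] .
    have "g s = (g s powr a) powr (1/a)" using gs a by (simp add: powr_powr)
    also have "\<dots> \<le> (2 * ((U + V)/2) powr a) powr (1/a)" using h a gs by (intro powr_mono2) auto
    also have "\<dots> = 2 powr (1/a) * ((U + V)/2)" using a UV by (simp add: powr_mult powr_powr)
    also have "\<dots> = k * (U + V)"
      by (simp add: k_def powr_diff)
    finally have "g s \<le> k * (U + V)" .
    thus "g s / k \<le> P g th 1 + P g th s" using k by (simp add: divide_le_eq U_def V_def mult.commute)
  qed
  thus ?thesis using k by (simp add: divide_le_eq mult.commute k_def)
qed

lemma metric_cong: assumes "metric_nn D" "\<And>x y. 0 \<le> x \<Longrightarrow> 0 \<le> y \<Longrightarrow> D x y = D' x y"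
  shows "metric_nn D'"
  using assms unfolding metric_nn_def by (metis order_refl)



lemma gs_mono_le: fixes gs :: "nat \<Rightarrow> real \<Rightarrow> real" assumes "\<And>n x. 0 \<le> x \<Longrightarrow> gs n x \<le> gs (Suc n) x" "0 \<le> x" "n \<le> m"
  shows "gs n x \<le> gs m x"
  using lift_Suc_mono_le[of "\<lambda>n. gs n x" n m] assms by blast

lemma persp_SUP:
  assumes gsC: "\<And>n. CC (gs n)" and inc: "\<And>n x. 0 \<le> x \<Longrightarrow> gs n x \<le> gs (Suc n) x"
    and Fi: "\<And>x. 0 \<le> x \<Longrightarrow> Finf x = (SUP n. ereal (gs n x))"
    and xy: "0 \<le> x" "0 \<le> y"
  shows "persp Finf x y = (SUP n. ereal (P (gs n) x y))"
proof (cases "y > 0")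
  case True
  have "persp Finf x y = ereal y * (SUP n. ereal (gs n (x/y)))"
    using True xy Fi[of "x/y"] by (simp add: persp_def)
  also have "\<dots> = (SUP n. ereal y * ereal (gs n (x/y)))"
    using True xy by (subst SUP_ereal_mult_left) (auto intro!: CC_nonneg[OF gsC])
  also have "\<dots> = (SUP n. ereal (P (gs n) x y))" using True by (simp add: P_def)
  finally show ?thesis .
next
  case False
  hence "y = 0" using xy by simp
  thus ?thesis using recF_SUP[OF gsC Fi xy(1)] by (simp add: persp_def P_def)
qed

lemma minimax:
  assumes gsC: "\<And>n. CC (gs n)" and inc: "\<And>n x. 0 \<le> x \<Longrightarrow> gs n x \<le> gs (Suc n) x"
    and gs0: "\<And>n x. 0 \<le> x \<Longrightarrow> gs 0 x \<le> gs n x" and pos: "0 < gs 0 2"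
    and Fi: "\<And>x. 0 \<le> x \<Longrightarrow> Finf x = (SUP n. ereal (gs n x))"
    and s: "0 \<le> s"
  shows "Htilde Finf (1, s) \<le> (SUP n. ereal (H (gs n) 1 s))"
proof (rule ccontr)
  define Phi where "Phi = (\<lambda>n th. P (gs n) th 1 + P (gs n) th s)"
  define M where "M = (SUP n. ereal (H (gs n) 1 s))"
  assume "\<not> Htilde Finf (1, s) \<le> (SUP n. ereal (H (gs n) 1 s))"
  hence lt: "M < Htilde Finf (1, s)" by (simp add: M_def)
  then obtain c where c: "M < ereal c" "ereal c < Htilde Finf (1, s)" using ereal_dense2 by blast
  have Phi_mono: "Phi n th \<le> Phi m th" if "n \<le> m" "0 \<le> th" for n m th
    unfolding Phi_def using that s
    by (intro add_mono P_mono[of "gs n" "gs m"] gs_mono_le[of gs, OF inc]) auto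
  have sum_SUP: "persp Finf th 1 + persp Finf th s = (SUP n. ereal (Phi n th))" if th: "0 \<le> th" for th
  proof -
    have "persp Finf th 1 + persp Finf th s = (SUP n. ereal (P (gs n) th 1)) + (SUP n. ereal (P (gs n) th s))"
      using persp_SUP[OF gsC inc Fi] th s by simp
    also have "\<dots> = (SUP n. ereal (P (gs n) th 1) + ereal (P (gs n) th s))"
    proof (rule SUP_ereal_add_pos[symmetric])
      show "incseq (\<lambda>n. ereal (P (gs n) th 1))"
        by (rule incseq_SucI) (use th in \<open>auto intro!: P_mono inc\<close>)
      show "incseq (\<lambda>n. ereal (P (gs n) th s))"
        by (rule incseq_SucI) (use th s in \<open>auto intro!: P_mono inc\<close>)
    qed (use th s in \<open>auto intro!: P_nonneg gsC\<close>)
    finally show ?thesis by (simp add: Phi_def)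
  qed
  have big: "\<exists>n. c < Phi n th" if th: "0 < th" for th
  proof -
    have "Htilde Finf (1, s) \<le> persp Finf th 1 + persp Finf th s"
      unfolding Htilde_def by (rule INF_lower2[where i=th]) (use th in auto)
    hence "ereal c < (SUP n. ereal (Phi n th))" using c sum_SUP[of th] th by simp
    thus ?thesis by (auto simp: less_SUP_iff)
  qed
  define th' where "th' = (if s > 0 then min 1 s else 1)"
  have th': "0 < th'" "th' \<le> 1" using s by (auto simp: th'_def)
  have Phi0: "Phi n th' \<le> Phi n 0" for n
  proof -
    have g: "CC (gs n)" by (rule gsC)
    have a1: "gs n th' \<le> (1 - th') * gs n 0" using CC_le0[OF g] th' by simp
    show ?thesis
    proof (cases "s > 0")
      case True
      have "th'/s \<le> 1" using True th' by (simp add: th'_def divide_le_eq_1)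
      hence "gs n (th'/s) \<le> gs n 0" using CC_dec[OF g, of 0 "th'/s"] th' True by simp
      hence b1: "s * gs n (th'/s) \<le> s * gs n 0" using True by simp
      have b2: "(1 - th') * gs n 0 \<le> gs n 0" using th' CC_nonneg[OF g, of 0] by (simp add: mult_left_le_one_le)
      have "gs n th' + s * gs n (th'/s) \<le> gs n 0 + s * gs n 0" using a1 b1 b2 by linarith
      thus ?thesis using True by (simp add: Phi_def P_def)
    next
      case False
      hence "s = 0" using s by simp
      thus ?thesis using a1 by (simp add: Phi_def P_def algebra_simps)
    qed
  qed
  define B where "B = max 2 (1 + c / gs 0 2)"
  have B: "2 \<le> B" "c \<le> (B - 1) * gs 0 2"
  proof -
    show "2 \<le> B" by (simp add: B_def)
    have "c / gs 0 2 \<le> B - 1" by (simp add: B_def)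
    thus "c \<le> (B - 1) * gs 0 2" using pos by (simp add: pos_divide_le_eq)
  qed
  have cover: "\<exists>n. c < Phi n th" if "th \<in> {0..B}" for th
  proof (cases "th = 0")
    case True
    obtain n where "c < Phi n th'" using big[OF th'(1)] by blast
    hence "c < Phi n 0" using Phi0[of n] by simp
    thus ?thesis using True by blast
  next
    case False thus ?thesis using that big by auto
  qed
  have contPhi: "continuous_on {0..} (Phi n)" for n
    unfolding Phi_def using s by (intro continuous_intros P_cont1[OF gsC]) auto
  have ex: "\<forall>n. \<exists>A. open A \<and> A \<inter> {0..} = Phi n -` {c<..} \<inter> {0..}"
  proof
    fix n
    have "open {c<..}" by simp
    thus "\<exists>A. open A \<and> A \<inter> {0..} = Phi n -` {c<..} \<inter> {0..}"
      using contPhi[of n] unfolding continuous_on_open_invariant by blast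
  qed
  from choice[OF ex] obtain Ob where O0: "\<forall>n. open (Ob n) \<and> Ob n \<inter> {0..} = Phi n -` {c<..} \<inter> {0..}" by blast
  have Ob: "\<And>n. open (Ob n)" "\<And>n. Ob n \<inter> {0..} = Phi n -` {c<..} \<inter> {0..}" using O0 by auto
  have K: "compact {0..B}" by simp
  have "{0..B} \<subseteq> (\<Union>n\<in>UNIV. Ob n)"
  proof
    fix th assume th: "th \<in> {0..B}"
    then obtain n where "c < Phi n th" using cover by blast
    hence "th \<in> Ob n \<inter> {0..}" using Ob(2)[of n] th by auto
    thus "th \<in> (\<Union>n\<in>UNIV. Ob n)" by auto
  qed
  then obtain J where J: "J \<subseteq> UNIV" "finite J" "{0..B} \<subseteq> (\<Union>n\<in>J. Ob n)"
    using compactE_image[OF K, of UNIV Ob] Ob(1) by blast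
  define N where "N = Max J"
  have allN: "c < Phi N th" if th: "th \<in> {0..B}" for th
  proof -
    obtain n where n: "n \<in> J" "th \<in> Ob n" using J th by blast
    hence "c < Phi n th" using Ob(2)[of n] th by auto
    moreover have "n \<le> N" using n J by (simp add: N_def)
    ultimately show ?thesis using Phi_mono[of n N th] th by auto
  qed
  have "c \<le> H (gs N) 1 s"
  proof (rule H_ge)
    fix th :: real assume th: "0 < th"
    show "c \<le> P (gs N) th 1 + P (gs N) th s"
    proof (cases "th \<le> B")
      case True thus ?thesis using allN[of th] th by (simp add: Phi_def)
    next
      case False
      have "c \<le> (B - 1) * gs 0 2" by (rule B(2))
      also have "\<dots> \<le> (th - 1) * gs 0 2" using False pos by (intro mult_right_mono) auto
      also have "\<dots> \<le> gs 0 th" using CC_grow[OF gsC[of 0], of th] False B by simp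
      also have "\<dots> \<le> gs N th" using gs0[of th N] th by simp
      also have "\<dots> = P (gs N) th 1" by (simp add: P_1)
      also have "\<dots> \<le> P (gs N) th 1 + P (gs N) th s" using P_nonneg[OF gsC, of th s N] th s by simp
      finally show ?thesis .
    qed
  qed
  moreover have "ereal (H (gs N) 1 s) \<le> M" unfolding M_def by (rule SUP_upper) simp
  ultimately have "ereal c \<le> M" by (metis ereal_less_eq(3) order_trans)
  thus False using c by simp
qed



context
  fixes g :: "real \<Rightarrow> real" and a :: real
  assumes g: "CC g" and g2: "0 < g 2" and a: "0 < a" "a < 1"
    and m: "metric_nn (\<lambda>x y. P g x y powr a)"
    and fx: "\<And>s. 0 \<le> s \<Longrightarrow> g s = 2 powr (1/a - 1) * H g 1 s"
begin

lemma d_tri: "0 \<le> x \<Longrightarrow> 0 \<le> y \<Longrightarrow> 0 \<le> z \<Longrightarrow> P g x z powr a \<le> P g x y powr a + P g y z powr a"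
  using m unfolding metric_nn_def by blast

lemma d_sym: "0 \<le> x \<Longrightarrow> 0 \<le> y \<Longrightarrow> P g x y powr a = P g y x powr a"
  using m unfolding metric_nn_def by blast

lemma d_zero: "0 \<le> x \<Longrightarrow> 0 \<le> y \<Longrightarrow> P g x y powr a = 0 \<longleftrightarrow> x = y"
  using m unfolding metric_nn_def by blast

lemma g0pos: "0 < g 0"
proof -
  have "P g 0 1 powr a \<noteq> 0" using d_zero[of 0 1] by simp
  hence "g 0 \<noteq> 0" by (simp add: P_def)
  thus ?thesis using CC_nonneg[OF g, of 0] by simp
qed

lemma f_eq: "0 \<le> x \<Longrightarrow> P g 0 x powr a = g 0 powr a * x powr a"
  by (cases "x = 0") (auto simp: P_def powr_mult mult.commute)

lemma f_mono: "0 \<le> x \<Longrightarrow> x < y \<Longrightarrow> P g 0 x powr a < P g 0 y powr a"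
  using f_eq[of x] f_eq[of y] g0pos a powr_less_mono2[of a x y] by simp

lemma f_mono_le: "0 \<le> x \<Longrightarrow> x \<le> y \<Longrightarrow> P g 0 x powr a \<le> P g 0 y powr a"
  using f_mono[of x y] by (cases "x = y") auto

lemma f_le_iff: "0 \<le> x \<Longrightarrow> 0 \<le> y \<Longrightarrow> P g 0 x powr a \<le> P g 0 y powr a \<longleftrightarrow> x \<le> y"
  using f_mono[of y x] f_mono_le[of x y] by (auto simp: not_le[symmetric])

lemma d_mono: assumes "0 \<le> z" "z \<le> x" "x \<le> y" shows "P g x y powr a \<le> P g z y powr a"
proof (cases "y = 0")
  case True
  hence "x = 0" "z = 0" using assms by auto
  thus ?thesis using True by simp
next
  case False
  hence y: "0 < y" using assms by simp
  have "g (x/y) \<le> g (z/y)" using CC_dec[OF g, of "z/y" "x/y"] assms y by (simp add: divide_right_mono divide_le_eq_1)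
  hence "P g x y \<le> P g z y" using y by (simp add: P_def)
  thus ?thesis using P_nonneg[OF g, of x y] assms a by (intro powr_mono2) auto
qed

lemma PH: assumes "0 \<le> z" "0 < w" shows "P g z w = 2 powr (1/a - 1) * H g z w"
proof (cases "z > 0")
  case True
  have "H g z w = H g (z*1) (z*(w/z))" using True by simp
  also have "\<dots> = z * H g 1 (w/z)" using True assms by (intro H_hom[OF g]) auto
  finally have h: "H g z w = z * H g 1 (w/z)" .
  have "P g z w = P g (z*1) (z*(w/z))" using True by simp
  also have "\<dots> = z * P g 1 (w/z)" using True by (rule P_hom)
  also have "\<dots> = z * g (w/z)" using P_1s[OF g, of "w/z"] True assms by simp
  also have "\<dots> = z * (2 powr (1/a - 1) * H g 1 (w/z))" using fx[of "w/z"] True assms by simp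
  finally show ?thesis using h by simp
next
  case False
  hence z: "z = 0" using assms by simp
  have e1: "P g z w = P g w 0" using P_sym[OF g, of 0 w] assms z by simp
  have e2: "P g w 0 = w * P g 1 0" using P_hom[OF assms(2), of g 1 0] by simp
  have e3: "P g 1 0 = 2 powr (1/a - 1) * H g 1 0" using P_1s[OF g, of 0] fx[of 0] by simp
  have e4: "H g w 0 = w * H g 1 0" using H_hom[OF g, of 1 0 w] assms by simp
  have e5: "H g z w = H g w 0" using z by (simp add: H_sym)
  show ?thesis using e1 e2 e3 e4 e5 by (simp add: algebra_simps)
qed

lemma argmin: assumes "0 \<le> z" "0 < w"
  shows "\<exists>th\<ge>0. P g th z + P g th w \<le> H g z w"
proof -
  define Psi where "Psi = (\<lambda>th. P g th z + P g th w)"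
  have cont: "continuous_on {0..} Psi" unfolding Psi_def
    using assms by (intro continuous_intros P_cont1[OF g]) auto
  define B where "B = max 1 (max (2*w) (w + Psi 1 / g 2))"
  have B: "1 \<le> B" "2*w \<le> B" "w + Psi 1 / g 2 \<le> B" by (auto simp: B_def)
  have "\<exists>x\<in>{0..B}. \<forall>y\<in>{0..B}. Psi x \<le> Psi y"
  proof (rule continuous_attains_inf)
    show "compact {0..B}" by simp
    show "{0..B} \<noteq> {}" using B by simp
    show "continuous_on {0..B} Psi" by (rule continuous_on_subset[OF cont]) auto
  qed
  then obtain t0 where t0: "t0 \<in> {0..B}" "\<And>y. y \<in> {0..B} \<Longrightarrow> Psi t0 \<le> Psi y" by blast
  have "Psi t0 \<le> Psi th" if th: "0 < th" for th
  proof (cases "th \<le> B")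
    case True thus ?thesis using t0 th by auto
  next
    case False
    have "Psi t0 \<le> Psi 1" using t0 B by auto
    also have "Psi 1 \<le> (th - w) * g 2"
    proof -
      have "Psi 1 / g 2 \<le> th - w" using B False by simp
      thus ?thesis using g2 by (simp add: pos_divide_le_eq)
    qed
    also have "(th - w) * g 2 = w * ((th/w - 1) * g 2)" using assms by (simp add: field_simps)
    also have "\<dots> \<le> w * g (th/w)"
    proof -
      have "2 \<le> th/w" using B False assms by (simp add: le_divide_eq)
      thus ?thesis using CC_grow[OF g, of "th/w"] assms by (intro mult_left_mono) auto
    qed
    also have "\<dots> = P g th w" using assms by (simp add: P_def)
    also have "\<dots> \<le> Psi th" unfolding Psi_def using P_nonneg[OF g, of th z] th assms by simp
    finally show ?thesis .
  qed
  hence "Psi t0 \<le> H g z w" by (intro H_ge) (simp add: Psi_def)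
  thus ?thesis using t0 unfolding Psi_def by auto
qed


lemma kap2: "2 * 2 powr (1/a - 1) = 2 powr (1/a)"
  by (simp add: powr_diff)

lemma two_pow_a: "(2 powr (1/a)) powr a = 2"
  using a by (simp add: powr_powr)

lemma delta_facts: "0 < (1 - 2 powr (a - 1))/2" "2 powr (a - 1) \<le> 1 - (1 - 2 powr (a - 1))/2"
  "(1 - 2 powr (a - 1))/2 < 1"
proof -
  have h: "2 powr (a - 1) < 2 powr 0" using a by (intro powr_less_mono) auto
  hence x1: "2 powr (a - 1) < 1" by simp
  have x0: "0 < 2 powr (a - 1)" by simp
  show "0 < (1 - 2 powr (a - 1))/2" using x1 by (simp add: field_simps)
  show "2 powr (a - 1) \<le> 1 - (1 - 2 powr (a - 1))/2" using x1 by (simp add: field_simps)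
  have "0 < 1 + 2 powr (a - 1)" by (intro add_pos_pos) auto
  thus "(1 - 2 powr (a - 1))/2 < 1" by (simp add: field_simps)
qed

lemma split_pt: assumes z: "0 \<le> z" "z < w" and Q: "P g z w powr a = P g 0 w powr a - P g 0 z powr a"
  shows "\<exists>th. z \<le> th \<and> th \<le> w \<and>
     P g z th powr a = P g 0 th powr a - P g 0 z powr a \<and>
     P g th w powr a = P g 0 w powr a - P g 0 th powr a \<and>
     (1 - 2 powr (a - 1))/2 * (P g 0 w powr a - P g 0 z powr a) \<le> P g 0 th powr a - P g 0 z powr a \<and>
     (1 - 2 powr (a - 1))/2 * (P g 0 w powr a - P g 0 z powr a) \<le> P g 0 w powr a - P g 0 th powr a"
proof -
  define k where "k = 2 powr (1/a - 1)"
  have k: "0 < k" by (simp add: k_def)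
  define dl where "dl = (1 - 2 powr (a - 1))/2"
  have w: "0 < w" using z by simp
  obtain th where th: "0 \<le> th" "P g th z + P g th w \<le> H g z w" using argmin[OF z(1) w] by blast
  define U where "U = P g th z"
  define V where "V = P g th w"
  define W where "W = P g z w"
  have UV: "0 \<le> U" "0 \<le> V" using P_nonneg[OF g] th z w by (auto simp: U_def V_def)
  have W0: "0 \<le> W" using P_nonneg[OF g] z w by (simp add: W_def)
  have UVW: "U + V \<le> W / k" using th PH[OF z(1) w] k by (simp add: U_def V_def W_def k_def field_simps)
  define u where "u = U powr a"
  define v where "v = V powr a"
  define fz where "fz = P g 0 z powr a"
  define fw where "fw = P g 0 w powr a"
  define ft where "ft = P g 0 th powr a"
  define D where "D = fw - fz"
  have D: "0 < D" using f_mono[OF z] by (simp add: D_def fw_def fz_def)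
  have WD: "W powr a = D" using Q by (simp add: W_def D_def fw_def fz_def)
  have u_sym: "P g z th powr a = u" using d_sym[of z th] th z by (simp add: u_def U_def)
  have "u + v \<le> 2 * ((U + V)/2) powr a" unfolding u_def v_def by (rule powr_concave2) (use UV a in auto)
  also have "\<dots> \<le> 2 * ((W / k)/2) powr a"
    using UVW UV a by (intro mult_left_mono powr_mono2) auto
  also have "(W / k)/2 = W / (2 * k)" by simp
  also have "2 * (W / (2 * k)) powr a = W powr a"
    using kap2 two_pow_a by (simp add: powr_divide k_def)
  finally have uv_le: "u + v \<le> D" using WD by simp
  have "D \<le> u + v"
    using d_tri[of z th w] th z w u_sym Q by (simp add: v_def V_def D_def fw_def fz_def)
  hence uvD: "u + v = D" using uv_le by simp
  have t1: "ft \<le> fz + u" using d_tri[of 0 z th] th z u_sym by (simp add: ft_def fz_def)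
  have t2: "fw \<le> ft + v" using d_tri[of 0 th w] th z w by (simp add: ft_def fw_def v_def V_def)
  have ftu: "ft = fz + u" using t1 t2 uvD D_def by simp
  have u0: "0 \<le> u" "0 \<le> v" by (simp_all add: u_def v_def)
  have "P g 0 z powr a \<le> P g 0 th powr a" using ftu u0 by (simp add: ft_def fz_def)
  hence zth: "z \<le> th" using f_le_iff[of z th] z th by simp
  have "P g 0 th powr a \<le> P g 0 w powr a" using ftu u0 uvD by (simp add: ft_def fw_def D_def)
  hence thw: "th \<le> w" using f_le_iff[of th w] th w by simp
  have Wpos: "0 < W" using WD D W0 by (cases "W = 0") auto
  have "D powr (1/a) = (W powr a) powr (1/a)" using WD by simp
  also have "\<dots> = W" using W0 a by (simp add: powr_powr)
  finally have Wback: "D powr (1/a) = W" .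
  have bal: "dl * D \<le> u" "dl * D \<le> v"
  proof -
    have key: "\<not> (dl * D > x)" if x: "0 \<le> x" "x + y = D" "0 \<le> y" "y powr (1/a) \<le> W / k" for x y
    proof
      assume lt: "dl * D > x"
      have "2 powr (a - 1) * D \<le> (1 - dl) * D" using delta_facts(2) D by (intro mult_right_mono) (auto simp: dl_def)
      also have "\<dots> < y" using lt x by (simp add: algebra_simps)
      finally have "2 powr (a - 1) * D < y" .
      hence "(2 powr (a - 1) * D) powr (1/a) < y powr (1/a)" using a D by (intro powr_less_mono2) auto
      also have "\<dots> \<le> W / k" by (rule x(4))
      also have "(2 powr (a - 1) * D) powr (1/a) = 2 powr ((a - 1) * (1/a)) * W"
        using Wback by (simp add: powr_mult powr_powr)
      also have "(a - 1) * (1/a) = -(1/a - 1)" using a by (simp add: field_simps)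
      finally have "2 powr (-(1/a - 1)) * W < W / k" .
      from this[unfolded powr_minus] show False by (simp add: k_def divide_inverse mult.commute)
    qed
    have "v powr (1/a) = V" using UV a by (simp add: v_def powr_powr)
    hence Vb: "v powr (1/a) \<le> W / k" using UVW UV by simp
    have "u powr (1/a) = U" using UV a by (simp add: u_def powr_powr)
    hence Ub: "u powr (1/a) \<le> W / k" using UVW UV by simp
    show "dl * D \<le> u" using key[of u v] u0 uvD Vb by (simp add: not_less)
    show "dl * D \<le> v" using key[of v u] u0 uvD Ub by (simp add: not_less add.commute)
  qed
  have c3: "P g z th powr a = ft - fz" using u_sym ftu by simp
  have c4: "P g th w powr a = fw - ft" using ftu uvD unfolding v_def V_def D_def by simp
  have c5: "dl * (fw - fz) \<le> ft - fz" using bal(1) ftu unfolding D_def by simp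
  have c6: "dl * (fw - fz) \<le> fw - ft" using bal(2) ftu uvD unfolding D_def by simp
  show ?thesis using zth thw c3 c4 c5 c6 unfolding ft_def fz_def fw_def dl_def by blast
qed


lemma dens:
  "\<forall>z x w. 0 \<le> z \<and> z \<le> x \<and> x \<le> w \<and> P g z w powr a = P g 0 w powr a - P g 0 z powr a \<longrightarrow>
    (\<exists>z'. z \<le> z' \<and> z' \<le> x \<and> P g z' w powr a = P g 0 w powr a - P g 0 z' powr a \<and>
       P g 0 x powr a - P g 0 z' powr a \<le> (1 - (1 - 2 powr (a - 1))/2) ^ n * (P g 0 w powr a - P g 0 z powr a))"
proof (induction n)
  case 0
  show ?case
  proof (intro allI impI)
    fix z x w :: real assume h: "0 \<le> z \<and> z \<le> x \<and> x \<le> w \<and> P g z w powr a = P g 0 w powr a - P g 0 z powr a"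
    have "P g 0 x powr a \<le> P g 0 w powr a" using h f_mono_le[of x w] by auto
    thus "\<exists>z'. z \<le> z' \<and> z' \<le> x \<and> P g z' w powr a = P g 0 w powr a - P g 0 z' powr a \<and>
       P g 0 x powr a - P g 0 z' powr a \<le> (1 - (1 - 2 powr (a - 1))/2) ^ 0 * (P g 0 w powr a - P g 0 z powr a)"
      using h by (intro exI[of _ z]) auto
  qed
next
  case (Suc n)
  define r where "r = 1 - (1 - 2 powr (a - 1))/2"
  have r: "0 \<le> r" using delta_facts(3) by (simp add: r_def)
  have rn: "0 \<le> r ^ n" using r by simp
  show ?case unfolding r_def[symmetric]
  proof (intro allI impI)
    fix z x w :: real assume h: "0 \<le> z \<and> z \<le> x \<and> x \<le> w \<and> P g z w powr a = P g 0 w powr a - P g 0 z powr a"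
    let ?f = "\<lambda>t. P g 0 t powr a"
    show "\<exists>z'. z \<le> z' \<and> z' \<le> x \<and> P g z' w powr a = ?f w - ?f z' \<and> ?f x - ?f z' \<le> r ^ Suc n * (?f w - ?f z)"
    proof (cases "z = w")
      case True
      hence "x = z" using h by auto
      thus ?thesis using h True by (intro exI[of _ z]) auto
    next
      case False
      hence zw: "z < w" using h by auto
      obtain th where th: "z \<le> th" "th \<le> w" "P g z th powr a = ?f th - ?f z" "P g th w powr a = ?f w - ?f th"
        "(1 - 2 powr (a - 1))/2 * (?f w - ?f z) \<le> ?f th - ?f z"
        "(1 - 2 powr (a - 1))/2 * (?f w - ?f z) \<le> ?f w - ?f th"
        using split_pt[of z w] h zw by blast
      have fwt: "?f w - ?f th \<le> r * (?f w - ?f z)" using th(5) by (simp add: r_def algebra_simps)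
      have ftz: "?f th - ?f z \<le> r * (?f w - ?f z)" using th(6) by (simp add: r_def algebra_simps)
      show ?thesis
      proof (cases "th \<le> x")
        case True
        obtain z' where z': "th \<le> z'" "z' \<le> x" "P g z' w powr a = ?f w - ?f z'"
          "?f x - ?f z' \<le> r ^ n * (?f w - ?f th)"
          using Suc.IH[unfolded r_def[symmetric], rule_format, of th x w] True h th by auto
        have "?f x - ?f z' \<le> r ^ n * (r * (?f w - ?f z))"
          using z'(4) mult_left_mono[OF fwt rn] by linarith
        thus ?thesis using z' th(1) by (intro exI[of _ z']) (auto simp: algebra_simps)
      next
        case False
        obtain z' where z': "z \<le> z'" "z' \<le> x" "P g z' th powr a = ?f th - ?f z'"
          "?f x - ?f z' \<le> r ^ n * (?f th - ?f z)"
          using Suc.IH[unfolded r_def[symmetric], rule_format, of z x th] False h th by auto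
        have "?f x - ?f z' \<le> r ^ n * (r * (?f w - ?f z))"
          using z'(4) mult_left_mono[OF ftz rn] by linarith
        moreover have "P g z' w powr a = ?f w - ?f z'"
        proof (rule antisym)
          have "P g z' w powr a \<le> P g z' th powr a + P g th w powr a"
            using h z' th by (intro d_tri) auto
          thus "P g z' w powr a \<le> ?f w - ?f z'" using z'(3) th(4) by simp
          have "?f w \<le> ?f z' + P g z' w powr a" using h z' by (intro d_tri) auto
          thus "?f w - ?f z' \<le> P g z' w powr a" by simp
        qed
        ultimately show ?thesis using z' by (intro exI[of _ z']) (auto simp: algebra_simps)
      qed
    qed
  qed
qed

lemma additive: assumes "0 \<le> x" "x \<le> y"
  shows "P g x y powr a = P g 0 y powr a - P g 0 x powr a"
proof (rule antisym)
  let ?f = "\<lambda>t. P g 0 t powr a"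
  define r where "r = 1 - (1 - 2 powr (a - 1))/2"
  have r: "0 \<le> r" "r < 1" using delta_facts by (auto simp: r_def)
  have f0: "?f 0 = 0" by (simp add: P_def)
  have Q0: "P g 0 y powr a = ?f y - ?f 0" using f0 by simp
  have bound: "P g x y powr a - (?f y - ?f x) \<le> r ^ n * ?f y" for n
  proof -
    obtain z' where z': "0 \<le> z'" "z' \<le> x" "P g z' y powr a = ?f y - ?f z'" "?f x - ?f z' \<le> r ^ n * (?f y - ?f 0)"
      using dens[of n, rule_format, of 0 x y] assms Q0 unfolding r_def by auto
    have "P g x y powr a \<le> P g z' y powr a" using z' assms by (intro d_mono) auto
    thus ?thesis using z' f0 by simp
  qed
  have lim: "(\<lambda>n. r ^ n * ?f y) \<longlonglongrightarrow> 0"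
    using r by (intro tendsto_mult_left_zero LIMSEQ_power_zero) auto
  have "P g x y powr a - (?f y - ?f x) \<le> 0"
    by (rule LIMSEQ_le_const[OF lim]) (use bound in auto)
  thus "P g x y powr a \<le> ?f y - ?f x" by simp
  have "?f y \<le> ?f x + P g x y powr a" using assms by (intro d_tri) auto
  thus "?f y - ?f x \<le> P g x y powr a" by simp
qed

lemma final_formula: assumes s: "0 \<le> s" shows "g s = g 0 * \<bar>s powr a - 1\<bar> powr (1/a)"
proof -
  have d1: "P g 1 s powr a = g 0 powr a * \<bar>s powr a - 1\<bar>"
  proof (cases "1 \<le> s")
    case True
    have "P g 1 s powr a = g 0 powr a * s powr a - g 0 powr a * 1 powr a"
      using additive[of 1 s] True f_eq[of s] f_eq[of 1] by simp
    moreover have "1 \<le> s powr a" using True a by (simp add: ge_one_powr_ge_zero)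
    ultimately show ?thesis by (simp add: algebra_simps)
  next
    case False
    have "P g 1 s powr a = P g s 1 powr a" using d_sym[of 1 s] s by simp
    also have "\<dots> = g 0 powr a * 1 powr a - g 0 powr a * s powr a"
      using additive[of s 1] False s f_eq[of s] f_eq[of 1] by simp
    finally have e: "P g 1 s powr a = g 0 powr a * (1 - s powr a)" by (simp add: algebra_simps)
    have "s powr a \<le> 1" using False s a by (intro powr_le1) auto
    thus ?thesis using e by (simp add: abs_if)
  qed
  have "g s = P g 1 s" using P_1s[OF g s] by simp
  also have "\<dots> = (P g 1 s powr a) powr (1/a)" using P_nonneg[OF g, of 1 s] s a by (simp add: powr_powr)
  also have "\<dots> = (g 0 powr a) powr (1/a) * \<bar>s powr a - 1\<bar> powr (1/a)" unfolding d1 by (simp add: powr_mult)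
  also have "(g 0 powr a) powr (1/a) = g 0" using g0pos a by (simp add: powr_powr)
  finally show ?thesis .
qed

end



lemma fin_CC:
  assumes G0: "Gamma0 Fx" and fin: "\<And>x. 0 \<le> x \<Longrightarrow> Fx x \<noteq> \<infinity>"
    and sym: "\<And>s. 0 < s \<Longrightarrow> Fx s = ereal s * Fx (1/s)"
  shows "CC (\<lambda>x. real_of_ereal (Fx x))" "\<And>x. 0 \<le> x \<Longrightarrow> Fx x = ereal (real_of_ereal (Fx x))"
proof -
  define g where "g = (\<lambda>x. real_of_ereal (Fx x))"
  have nn: "\<And>x. 0 \<le> x \<Longrightarrow> 0 \<le> Fx x" using G0 by (simp add: Gamma0_def)
  show eq: "\<And>x. 0 \<le> x \<Longrightarrow> Fx x = ereal (real_of_ereal (Fx x))"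
  proof -
    fix x :: real assume x: "0 \<le> x"
    have "Fx x \<noteq> -\<infinity>" using nn[OF x] by auto
    thus "Fx x = ereal (real_of_ereal (Fx x))" using fin[OF x] by (cases "Fx x") auto
  qed
  have eqg: "\<And>x. 0 \<le> x \<Longrightarrow> Fx x = ereal (g x)" using eq by (simp add: g_def)
  have c: "cvx g" unfolding cvx_def
  proof (intro allI impI)
    fix x y t :: real assume h: "0 \<le> x" "0 \<le> y" "0 \<le> t \<and> t \<le> 1"
    have z: "0 \<le> t*x + (1-t)*y" using h by simp
    have "Fx (t*x + (1-t)*y) \<le> ereal t * Fx x + ereal (1-t) * Fx y"
      using G0 h unfolding Gamma0_def convex_nn_def by blast
    thus "g (t*x + (1-t)*y) \<le> t * g x + (1-t) * g y"
      using eqg[OF z] eqg[OF h(1)] eqg[OF h(2)] by simp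
  qed
  have lsc: "\<forall>\<^sub>F x in at 0 within {0..}. g 0 - e < g x" if e: "0 < e" for e
  proof -
    have "Fx 0 \<le> Liminf (at 0 within {0..}) Fx" using G0 unfolding Gamma0_def lsc_within_def by auto
    hence "\<forall>y<Fx 0. \<forall>\<^sub>F x in at 0 within {0..}. y < Fx x" by (simp add: le_Liminf_iff)
    moreover have "ereal (g 0 - e) < Fx 0" using eqg[of 0] e by simp
    ultimately have ev: "\<forall>\<^sub>F x in at 0 within {0..}. ereal (g 0 - e) < Fx x" by blast
    have "\<forall>\<^sub>F x in at 0 within {0..}. x \<in> {0..}" by (rule ev_within) auto
    with ev show ?thesis
    proof eventually_elim
      case (elim x) thus ?case using eqg[of x] by simp
    qed
  qed
  show "CC (\<lambda>x. real_of_ereal (Fx x))" unfolding g_def[symmetric] CC_def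
  proof (intro conjI allI impI)
    show "0 \<le> g x" if "0 \<le> x" for x using nn[OF that] eqg[OF that] by simp
    show "g 1 = 0" using G0 by (simp add: Gamma0_def g_def)
    show "cvx g" by (rule c)
    show "continuous_on {0..} g" by (rule cont_from_lsc[OF c lsc])
    show "g s = s * g (1/s)" if s: "0 < s" for s
      using sym[OF s] eqg[of s] eqg[of "1/s"] s by simp
  qed
qed



lemma metric_nn_zero: "metric_nn D \<Longrightarrow> 0 \<le> x \<Longrightarrow> 0 \<le> y \<Longrightarrow> (D x y = 0 \<longleftrightarrow> x = y)"
  unfolding metric_nn_def by blast

theorem mainTheorem9:
  fixes a :: real and F :: "real \<Rightarrow> ereal"
  assumes "0 < a" "a < 1"
    and "Gamma0s F"
    and "persp_pow_metric a F"
  shows "(\<forall>n. \<forall>s\<ge>0. (Ta a ^^ n) F s \<le> (Ta a ^^ Suc n) F s) \<and>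
         (\<exists>Finf. Gamma0 Finf \<and>
            (\<forall>s\<ge>0. (\<lambda>n. (Ta a ^^ n) F s) \<longlonglongrightarrow> Finf s) \<and>
            (\<forall>s\<ge>0. Ta a Finf s = Finf s) \<and>
            (persp_pow_metric a Finf \<longrightarrow>
               (\<exists>c>0. \<forall>s\<ge>0. Finf s = ereal (c * \<bar>s powr a - 1\<bar> powr (1 / a)))))"
proof -
  note a = assms(1,2)
  define k where "k = 2 powr (1/a - 1)"
  have k: "0 < k" by (simp add: k_def)
  have G0F: "Gamma0 F" using assms(3) by (simp add: Gamma0s_def)
  have finF: "F x \<noteq> \<infinity>" if "0 \<le> x" for x
  proof -
    have "persp F x 1 \<noteq> \<infinity>" using assms(4) that by (simp add: persp_pow_metric_def)
    thus ?thesis by (simp add: persp_def)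
  qed
  have symF: "F s = ereal s * F (1/s)" if s: "0 < s" for s
  proof -
    have "F s = reverse_entropy F s" using assms(3) s unfolding Gamma0s_def by auto
    also have "\<dots> = ereal s * F (1/s)" using s unfolding reverse_entropy_def by (rule if_P)
    finally show ?thesis .
  qed
  define g0 where "g0 = (\<lambda>x. real_of_ereal (F x))"
  have CC0: "CC g0" unfolding g0_def by (rule fin_CC(1)[OF G0F finF symF])
  have Feq: "\<And>x. 0 \<le> x \<Longrightarrow> F x = ereal (g0 x)" unfolding g0_def by (rule fin_CC(2)[OF G0F finF symF])
  have perspF: "\<And>x y. 0 \<le> x \<Longrightarrow> 0 \<le> y \<Longrightarrow> persp F x y = ereal (P g0 x y)"
    by (rule persp_single[OF CC0 Feq])
  have m0: "metric_nn (\<lambda>x y. P g0 x y powr a)"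
    by (rule metric_cong[of "\<lambda>x y. real_of_ereal (persp F x y) powr a"])
       (use assms(4) perspF in \<open>auto simp: persp_pow_metric_def\<close>)
  have pos0: "0 < g0 2"
  proof -
    have "P g0 2 1 powr a \<noteq> 0" using metric_nn_zero[OF m0, of 2 1] by simp
    hence "g0 2 \<noteq> 0" by (simp add: P_def)
    thus ?thesis using CC_nonneg[OF CC0, of 2] by simp
  qed
  define stp where "stp = (\<lambda>(g::real \<Rightarrow> real) s. k * H g 1 s)"
  define gs where "gs = (\<lambda>n. (stp ^^ n) g0)"
  have gsS: "gs (Suc n) = (\<lambda>s. k * H (gs n) 1 s)" for n by (simp add: gs_def stp_def)
  have gs0: "gs 0 = g0" by (simp add: gs_def)
  have chain: "CC (gs n) \<and> 0 < gs n 2 \<and> (\<forall>x\<ge>0. g0 x \<le> gs n x) \<and> (\<forall>x\<ge>0. gs n x \<le> gs (Suc n) x)" for n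
  proof (induction n)
    case 0
    have "\<forall>x\<ge>0. g0 x \<le> gs (Suc 0) x"
      using base_ineq[OF CC0 a m0] by (simp add: gsS gs0 k_def)
    thus ?case using CC0 pos0 by (simp add: gs0)
  next
    case (Suc n)
    have C: "CC (gs (Suc n))" unfolding gsS using CC_step[OF _ _ k] Suc by blast
    have i1: "gs n 2 \<le> gs (Suc n) 2" using Suc.IH by simp
    have i2: "0 < gs n 2" using Suc.IH by simp
    have p: "0 < gs (Suc n) 2" using i1 i2 by linarith
    have l: "\<forall>x\<ge>0. g0 x \<le> gs (Suc n) x"
    proof (intro allI impI)
      fix x :: real assume x: "0 \<le> x"
      have "g0 x \<le> gs n x" "gs n x \<le> gs (Suc n) x" using Suc.IH x by auto
      thus "g0 x \<le> gs (Suc n) x" by linarith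
    qed
    have "\<forall>x\<ge>0. gs (Suc n) x \<le> gs (Suc (Suc n)) x"
    proof (intro allI impI)
      fix x :: real assume x: "0 \<le> x"
      have "H (gs n) 1 x \<le> H (gs (Suc n)) 1 x" using Suc x by (intro H_mono) auto
      thus "gs (Suc n) x \<le> gs (Suc (Suc n)) x" unfolding gsS using k by simp
    qed
    thus ?case using C p l by blast
  qed
  have gsC: "\<And>n. CC (gs n)" using chain by blast
  have gspos: "\<And>n. 0 < gs n 2" using chain by blast
  have gsinc: "\<And>n x. 0 \<le> x \<Longrightarrow> gs n x \<le> gs (Suc n) x" using chain by blast
  have gsge: "\<And>n x. 0 \<le> x \<Longrightarrow> gs 0 x \<le> gs n x" using chain gs0 by auto
  have iter: "(Ta a ^^ n) F x = ereal (gs n x)" if "0 \<le> x" for n x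
    using that
  proof (induction n arbitrary: x)
    case 0 thus ?case using Feq by (simp add: gs0)
  next
    case (Suc n)
    have "(Ta a ^^ Suc n) F x = Ta a ((Ta a ^^ n) F) x" by simp
    also have "\<dots> = ereal (k * H (gs n) 1 x)"
      unfolding k_def by (rule Ta_single[OF gsC gspos Suc.IH Suc.prems])
    finally show ?case by (simp add: gsS)
  qed
  have part1: "\<forall>n. \<forall>s\<ge>0. (Ta a ^^ n) F s \<le> (Ta a ^^ Suc n) F s"
  proof (intro allI impI)
    fix n s assume s: "(0::real) \<le> s"
    have e1: "(Ta a ^^ n) F s = ereal (gs n s)" by (rule iter[OF s])
    have e2: "(Ta a ^^ Suc n) F s = ereal (gs (Suc n) s)" by (rule iter[OF s])
    show "(Ta a ^^ n) F s \<le> (Ta a ^^ Suc n) F s" unfolding e1 e2 using gsinc[OF s] by simp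
  qed
  define Finf where "Finf = (\<lambda>x. SUP n. ereal (gs n x))"
  have Fi: "\<And>x. 0 \<le> x \<Longrightarrow> Finf x = (SUP n. ereal (gs n x))" by (simp add: Finf_def)
  have incs: "incseq (\<lambda>n. ereal (gs n x))" if "0 \<le> x" for x
    by (rule incseq_SucI) (use gsinc that in auto)
  have conv: "\<forall>s\<ge>0. (\<lambda>n. (Ta a ^^ n) F s) \<longlonglongrightarrow> Finf s"
  proof (intro allI impI)
    fix s :: real assume s: "0 \<le> s"
    have "(\<lambda>n. ereal (gs n s)) \<longlonglongrightarrow> Finf s" unfolding Finf_def by (rule LIMSEQ_SUP[OF incs[OF s]])
    thus "(\<lambda>n. (Ta a ^^ n) F s) \<longlonglongrightarrow> Finf s" using iter[OF s] by simp
  qed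
  have Fnn: "0 \<le> Finf x" if "0 \<le> x" for x
  proof -
    have "ereal (gs 0 x) \<le> Finf x" unfolding Finf_def by (rule SUP_upper) simp
    thus ?thesis using CC_nonneg[OF gsC that, of 0] by (simp add: order_trans[rotated])
  qed
  have G0inf: "Gamma0 Finf"
    unfolding Gamma0_def
  proof (intro conjI allI impI)
    show "0 \<le> Finf x" if "0 \<le> x" for x using Fnn[OF that] .
    show "Finf 1 = 0" using CC_1[OF gsC] by (simp add: Finf_def)
    show "convex_nn Finf" unfolding convex_nn_def
    proof (intro allI impI)
      fix x y t :: real assume h: "0 \<le> x" "0 \<le> y" "0 \<le> t \<and> t \<le> 1"
      show "Finf (t*x + (1-t)*y) \<le> ereal t * Finf x + ereal (1-t) * Finf y"
        unfolding Finf_def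
      proof (rule SUP_least)
        fix n
        have "gs n (t*x + (1-t)*y) \<le> t * gs n x + (1-t) * gs n y"
          using cvxD[OF CC_cvx[OF gsC], of x y t n] h by simp
        hence "ereal (gs n (t*x + (1-t)*y)) \<le> ereal t * ereal (gs n x) + ereal (1-t) * ereal (gs n y)" by simp
        also have "\<dots> \<le> ereal t * (SUP n. ereal (gs n x)) + ereal (1-t) * (SUP n. ereal (gs n y))"
          using h by (intro add_mono ereal_mult_left_mono SUP_upper) auto
        finally show "ereal (gs n (t*x + (1-t)*y)) \<le> ereal t * (SUP n. ereal (gs n x)) + ereal (1-t) * (SUP n. ereal (gs n y))" .
      qed
    qed
    show "lsc_within {0..} Finf"
      unfolding lsc_within_def le_Liminf_iff
    proof (intro ballI allI impI)
      fix x y assume x: "x \<in> {0..}" and y: "y < Finf x"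
      then obtain n where n: "y < ereal (gs n x)" by (auto simp: Finf_def less_SUP_iff)
      have "(gs n \<longlongrightarrow> gs n x) (at x within {0..})"
        using CC_cont[OF gsC] x by (simp add: continuous_on_def)
      hence "((\<lambda>z. ereal (gs n z)) \<longlongrightarrow> ereal (gs n x)) (at x within {0..})" by (rule tendsto_ereal)
      hence "\<forall>\<^sub>F z in at x within {0..}. y < ereal (gs n z)" using n by (rule order_tendstoD)
      thus "\<forall>\<^sub>F z in at x within {0..}. y < Finf z"
        by eventually_elim (auto simp: Finf_def less_SUP_iff)
    qed
  qed
  have fixp: "Ta a Finf s = Finf s" if s: "0 \<le> s" for s
  proof (rule antisym)
    have "HF Finf 1 s \<le> Htilde Finf (1, s)" unfolding HF_def by (rule env_le) (use s in auto)
    also have "\<dots> \<le> (SUP n. ereal (H (gs n) 1 s))" by (rule minimax[OF gsC gsinc gsge gspos[of 0] Fi s])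
    finally have h1: "HF Finf 1 s \<le> (SUP n. ereal (H (gs n) 1 s))" .
    have "Ta a Finf s \<le> ereal k * (SUP n. ereal (H (gs n) 1 s))"
      unfolding Ta_def k_def[symmetric] using h1 k by (intro ereal_mult_left_mono) auto
    also have "\<dots> = (SUP n. ereal k * ereal (H (gs n) 1 s))"
      by (rule SUP_ereal_mult_left[symmetric]) (use k s H_nonneg[OF gsC] in auto)
    also have "\<dots> = (SUP n. ereal (gs (Suc n) s))" by (simp add: gsS)
    also have "\<dots> \<le> Finf s" unfolding Finf_def by (intro SUP_mono) auto
    finally show "Ta a Finf s \<le> Finf s" .
  next
    have each: "ereal (gs (Suc n) s) \<le> Ta a Finf s" for n
    proof -
      have Gn: "\<And>x. 0 \<le> x \<Longrightarrow> ereal (gs n x) = ereal (gs n x)" by simp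
      have "ereal (gs (Suc n) s) = Ta a (\<lambda>x. ereal (gs n x)) s"
        using Ta_single[OF gsC gspos Gn s, of a] by (simp add: gsS k_def)
      also have "\<dots> \<le> Ta a Finf s"
        unfolding Ta_def
      proof (intro ereal_mult_left_mono)
        show "HF (\<lambda>x. ereal (gs n x)) 1 s \<le> HF Finf 1 s"
          unfolding HF_def
        proof (rule env_mono)
          fix q :: "real \<times> real" assume q: "q \<in> {0..} \<times> {0..}"
          show "Htilde (\<lambda>x. ereal (gs n x)) q \<le> Htilde Finf q"
            unfolding Htilde_def
          proof (rule INF_mono)
            fix th :: real assume th: "th \<in> {0<..}"
            have le: "persp (\<lambda>x. ereal (gs n x)) th r \<le> persp Finf th r" if r: "0 \<le> r" for r
            proof -
              have "persp (\<lambda>x. ereal (gs n x)) th r = ereal (P (gs n) th r)"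
                using persp_single[OF gsC Gn] th r by simp
              also have "\<dots> \<le> (SUP m. ereal (P (gs m) th r))" by (rule SUP_upper) simp
              also have "\<dots> = persp Finf th r" using persp_SUP[OF gsC gsinc Fi] th r by simp
              finally show ?thesis .
            qed
            show "\<exists>m\<in>{0<..}. persp (\<lambda>x. ereal (gs n x)) m (fst q) + persp (\<lambda>x. ereal (gs n x)) m (snd q)
                     \<le> persp Finf th (fst q) + persp Finf th (snd q)"
              using th q le by (intro bexI[of _ th] add_mono) auto
          qed
        qed
      qed simp
      finally show ?thesis .
    qed
    have "Finf s \<le> (SUP n. ereal (gs (Suc n) s))"
      unfolding Finf_def by (rule SUP_mono) (use gsinc s in auto)
    also have "\<dots> \<le> Ta a Finf s" by (rule SUP_least) (use each in auto)
    finally show "Finf s \<le> Ta a Finf s" .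
  qed
  have final: "\<exists>c>0. \<forall>s\<ge>0. Finf s = ereal (c * \<bar>s powr a - 1\<bar> powr (1 / a))"
    if pm: "persp_pow_metric a Finf"
  proof -
    have finI: "Finf x \<noteq> \<infinity>" if "0 \<le> x" for x
    proof -
      have "persp Finf x 1 \<noteq> \<infinity>" using pm that by (simp add: persp_pow_metric_def)
      thus ?thesis by (simp add: persp_def)
    qed
    have symI: "Finf s = ereal s * Finf (1/s)" if s: "0 < s" for s
    proof -
      have each: "ereal (gs n s) = ereal s * ereal (gs n (1/s))" for n
      proof -
        have "gs n s = s * gs n (1/s)" by (rule CC_sym[OF gsC s])
        thus ?thesis by simp
      qed
      have "Finf s = (SUP n. ereal s * ereal (gs n (1/s)))"
        unfolding Finf_def by (rule SUP_cong[OF refl each])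
      also have "\<dots> = ereal s * Finf (1/s)"
        unfolding Finf_def by (rule SUP_ereal_mult_left) (use s CC_nonneg[OF gsC] in auto)
      finally show ?thesis .
    qed
    define G where "G = (\<lambda>x. real_of_ereal (Finf x))"
    have CCG: "CC G" unfolding G_def by (rule fin_CC(1)[OF G0inf finI symI])
    have Geq: "\<And>x. 0 \<le> x \<Longrightarrow> Finf x = ereal (G x)" unfolding G_def by (rule fin_CC(2)[OF G0inf finI symI])
    have posG: "0 < G 2"
    proof -
      have "ereal (gs 0 2) \<le> Finf 2" unfolding Finf_def by (rule SUP_upper) simp
      hence "gs 0 2 \<le> G 2" using Geq[of 2] by simp
      thus ?thesis using gspos[of 0] by simp
    qed
    have mG: "metric_nn (\<lambda>x y. P G x y powr a)"
      by (rule metric_cong[of "\<lambda>x y. real_of_ereal (persp Finf x y) powr a"])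
         (use pm persp_single[OF CCG Geq] in \<open>auto simp: persp_pow_metric_def\<close>)
    have fxG: "G s = 2 powr (1/a - 1) * H G 1 s" if s: "0 \<le> s" for s
    proof -
      have "ereal (G s) = Ta a Finf s" using fixp[OF s] Geq[OF s] by simp
      also have "\<dots> = ereal (2 powr (1/a - 1) * H G 1 s)" by (rule Ta_single[OF CCG posG Geq s])
      finally show ?thesis by simp
    qed
    have c: "0 < G 0" by (rule g0pos[OF CCG posG a mG fxG])
    have "\<forall>s\<ge>0. Finf s = ereal (G 0 * \<bar>s powr a - 1\<bar> powr (1 / a))"
    proof (intro allI impI)
      fix s :: real assume s: "0 \<le> s"
      have "G s = G 0 * \<bar>s powr a - 1\<bar> powr (1 / a)" by (rule final_formula[OF CCG posG a mG fxG s])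
      thus "Finf s = ereal (G 0 * \<bar>s powr a - 1\<bar> powr (1 / a))" using Geq[OF s] by simp
    qed
    thus ?thesis using c by blast
  qed
  show ?thesis using part1 G0inf conv fixp final by blast
qed


end
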